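(* Let $0<p<1$, $0\le r\le1$ with $p\ne r$, $m:=r/p>1$, $T\in\mathbb{N}$ and $k\in\mathbb{N}$. Let $(H_i)_{i\ge1}$ be i.i.d. with $\mathbb{P}(H>n)=\frac{r-p}{(1-p)m^n-(1-r)}$ for $n\ge0$, $H_0:=T$, $N_T:=\min\{i\ge1:H_i>T\}$. Conditionally on $\{N_T\ge k\}$, choose $k$ tips $s_0<\dots<s_{k-1}$ uniformly at random among the subsets of size $k$ of $\{0,\dots,N_T-1\}$ (independently of $(H_i)$ given $N_T$); set $H_{k,0}:=T$ and $H_{k,i}:=\max\{H_{s_{i-1}+1},\dots,H_{s_i}\}$ for $1\le i<k$, and let $\mathbf{T}_k$ be the ultrametric oriented tree with node depths $(H_{k,0},\dots,H_{k,k-1})$. Let $\delta_T:=\mathbb{P}(H>T)$ and $$\mu_k(\mathrm{d}y):=\frac{k\,\delta_T\,y^{k-1}}{(1-(1-\delta_T)(1-y))^{k+1}}\,\mathrm{d}y,\qquad y\in(0,1).$$ Then: (1) Conditionally on $\{N_T\ge k\}$, $(H_{k,0},H_{k,1},\dots,H_{k,k-1})$ has the same law as $(T,G_1,\dots,G_{k-1})$, where $Y$ is a random variable with law $\mu_k$ and, conditionally on $Y=y$, $G_1,\dots,G_{k-1}$ are i.i.d. with $$\mathbb{P}(G_i\le j\mid Y=y)=\frac{m^j-1}{m^T-1}\cdot\frac{r-p+y(1-p)(m^T-1)}{r-p+y(1-p)(m^j-1)},\qquad 1\le j\le T.$$ (2) For every ultrametric oriented tree $\tau$ with node depths $x_0=T$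 and $x_1,\dots,x_{k-1}\in\{1,\dots,T\}$, the likelihood of $(p,r)$ given $\{\mathbf{T}_k=\tau\}$ is $$\mathcal{L}(p,r\mid\tau,k)=\mathbb{P}(\mathbf{T}_k=\tau\mid N_T\ge k)=\int_0^1\mu_k(\mathrm{d}y)\prod_{i=1}^{k-1}\frac{\mathbb{P}(H_{y}=x_i)}{\mathbb{P}(H_{y}\le T)},$$ where, for $y\in(0,1)$, $H_y$ denotes a random variable with $\mathbb{P}(H_y>n)=\frac{r-p}{y(1-p)m^n-[y(1-p)-(r-p)]}$ for $n\ge0$.
   Context: $(H_i)_{i\ge1}$ is the coalescent point process of a Bienaymé–Galton–Watson process with $(p,r)$-linear fractional offspring law $\mathbb{P}(\xi=0)=1-r$, $\mathbb{P}(\xi=k)=rp(1-p)^{k-1}$ ($k\ge1$): $H_i$ is the coalescent time of consecutive tips $i-1,i$ and the coalescent time of tips $i<j$ is $\max\{H_{i+1},\dots,H_j\}$. The CPP$(T)$ tree consists of tips $0,\dots,N_T-1$ with node depths $H_0=T,H_1,\dots,H_{N_T-1}$; $\mathbf{T}_k$ is the subtree spanned by a uniform sample of $k$ tips, $H_{k,i}$ being the coalescent time between the $(i-1)$-th and $i$-th sampled tips. An ultrametric oriented tree is identified with its sequence of node depths. The variable $H_y$ is the law of the coalescent time between consecutive sampled tips when each tip of the (infinite) CPP is sampled independently with probability $y$. *)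

theory Defs
  imports "HOL-Probability.Probability"
begin

definition Htail :: "real \<Rightarrow> real \<Rightarrow> nat \<Rightarrow> real" where
  "Htail p r n = (r - p) / ((1 - p) * (r / p) ^ n - (1 - r))"

definition Hprob :: "real \<Rightarrow> real \<Rightarrow> nat \<Rightarrow> real" where
  "Hprob p r n = (if n = 0 then 1 else Htail p r (n - 1)) - Htail p r n"

definition Hdist :: "real \<Rightarrow> real \<Rightarrow> nat pmf" where
  "Hdist p r = embed_pmf (Hprob p r)"

text \<open>The i.i.d. sequence: omega !! (i-1) is H_i for i >= 1, and H_0 = T.\<close>
definition Hseq :: "nat \<Rightarrow> nat stream \<Rightarrow> nat \<Rightarrow> nat" where
  "Hseq T \<omega> i = (if i = 0 then T else \<omega> !! (i - 1))"

definition NT :: "nat \<Rightarrow> nat stream \<Rightarrow> nat" where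
  "NT T \<omega> = (LEAST i. 1 \<le> i \<and> T < Hseq T \<omega> i)"

definition ksubsets :: "nat \<Rightarrow> nat \<Rightarrow> nat set set" where
  "ksubsets n k = {S. S \<subseteq> {..<n} \<and> card S = k}"

definition tip :: "nat set \<Rightarrow> nat \<Rightarrow> nat" where
  "tip S i = sorted_list_of_set S ! i"

definition sampled_depths :: "nat \<Rightarrow> nat stream \<Rightarrow> nat set \<Rightarrow> nat list" where
  "sampled_depths T \<omega> S =
     T # map (\<lambda>i. Max (Hseq T \<omega> ` {tip S (i - 1) + 1 .. tip S i})) [1..<card S]"

text \<open>P(T_k = d | N_T >= k): the k tips are chosen uniformly among the k-subsets of
  {0..N_T-1}, independently of (H_i) given N_T (law of total probability).\<close>
definition tree_cond_prob :: "real \<Rightarrow> real \<Rightarrow> nat \<Rightarrow> nat \<Rightarrow> nat list \<Rightarrow> real" where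
  "tree_cond_prob p r T k d =
     (let M = stream_space (measure_pmf (Hdist p r)) in
       (\<integral>\<omega>. (if k \<le> NT T \<omega>
              then pmf (map_pmf (sampled_depths T \<omega>) (pmf_of_set (ksubsets (NT T \<omega>) k))) d
              else 0) \<partial>M)
       / measure M {\<omega> \<in> space M. k \<le> NT T \<omega>})"

definition mu_dens :: "nat \<Rightarrow> real \<Rightarrow> real \<Rightarrow> real" where
  "mu_dens k \<delta> y = real k * \<delta> * y ^ (k - 1) / (1 - (1 - \<delta>) * (1 - y)) ^ (k + 1)"

definition Gcdf :: "real \<Rightarrow> real \<Rightarrow> nat \<Rightarrow> real \<Rightarrow> nat \<Rightarrow> real" where
  "Gcdf p r T y j =
     (if j = 0 then 0 else if T \<le> j then 1 else
       ((r / p) ^ j - 1) / ((r / p) ^ T - 1) *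
       ((r - p + y * (1 - p) * ((r / p) ^ T - 1)) / (r - p + y * (1 - p) * ((r / p) ^ j - 1))))"

definition Gprob :: "real \<Rightarrow> real \<Rightarrow> nat \<Rightarrow> real \<Rightarrow> nat \<Rightarrow> real" where
  "Gprob p r T y j = (if j = 0 then Gcdf p r T y 0 else Gcdf p r T y j - Gcdf p r T y (j - 1))"

definition mixture_prob :: "real \<Rightarrow> real \<Rightarrow> nat \<Rightarrow> nat \<Rightarrow> nat list \<Rightarrow> real" where
  "mixture_prob p r T k d =
     (if length d = k \<and> d ! 0 = T then
        (LINT y:{0<..<1}|lborel. mu_dens k (Htail p r T) y *
            (\<Prod>i\<in>{1..<k}. Gprob p r T y (d ! i)))
      else 0)"

definition Hytail :: "real \<Rightarrow> real \<Rightarrow> real \<Rightarrow> nat \<Rightarrow> real" where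
  "Hytail p r y n = (r - p) / (y * (1 - p) * (r / p) ^ n - (y * (1 - p) - (r - p)))"

definition Hyprob :: "real \<Rightarrow> real \<Rightarrow> real \<Rightarrow> nat \<Rightarrow> real" where
  "Hyprob p r y n = (if n = 0 then 1 else Hytail p r y (n - 1)) - Hytail p r y n"

end

theory Submission
  imports Defs "HOL-Analysis.Analysis"
begin

locale cpp =
  fixes p r :: real and T :: nat
  assumes p0: "0 < p" and p1: "p < 1" and r1: "r \<le> 1" and m1: "r / p > 1" and T1: "1 \<le> T"
begin

abbreviation "cc \<equiv> r - p"
definition "u n = (1 - p) * ((r/p)^n - 1)"

lemma cc_pos: "cc > 0" using m1 p0 by (simp add: field_simps)
lemma m_ge1: "(r/p)^n \<ge> 1" using m1 by (simp add: one_le_power)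
lemma u_nonneg: "u n \<ge> 0" using m_ge1[of n] p1 unfolding u_def by simp
lemma u_pos: "n > 0 \<Longrightarrow> u n > 0" using m1 p1 unfolding u_def by (simp add: one_less_power)
lemma u_mono: "i \<le> j \<Longrightarrow> u i \<le> u j"
  unfolding u_def using p1 m1 by (intro mult_left_mono) (auto intro: power_increasing)

lemma Htail_u: "Htail p r n = cc / (u n + cc)"
  unfolding Htail_def u_def by (simp add: algebra_simps)

lemma Htail_0[simp]: "Htail p r 0 = 1"
  using cc_pos by (simp add: Htail_u u_def)

lemma Htail_nonneg: "Htail p r n \<ge> 0"
  using cc_pos u_nonneg[of n] by (simp add: Htail_u)

lemma Htail_le1: "Htail p r n \<le> 1"
  using cc_pos u_nonneg[of n] by (simp add: Htail_u)

lemma Htail_mono: "i \<le> j \<Longrightarrow> Htail p r j \<le> Htail p r i"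
  using cc_pos u_nonneg[of i] u_mono[of i j] by (simp add: Htail_u frac_le)

lemma Htail_lt1: "n > 0 \<Longrightarrow> Htail p r n < 1"
  using cc_pos u_pos[of n] by (simp add: Htail_u)

lemma Htail_pos: "Htail p r n > 0"
  using cc_pos u_nonneg[of n] by (simp add: Htail_u)

lemma Htail_lim: "(\<lambda>n. Htail p r n) \<longlonglongrightarrow> 0"
proof -
  have 1: "filterlim (\<lambda>n. (r/p)^n) at_top sequentially"
    using m1 by (simp add: Archimedean_eventually_pow filterlim_at_top_dense)
  have 2: "filterlim (\<lambda>n. (1 - p) * (r/p)^n) at_top sequentially"
    by (rule filterlim_tendsto_pos_mult_at_top[OF tendsto_const _ 1]) (use p1 in simp)
  have 3: "filterlim (\<lambda>n. (- (1 - r)) + (1 - p) * (r/p)^n) at_top sequentially"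
    by (rule filterlim_tendsto_add_at_top[OF tendsto_const 2])
  then have 3: "filterlim (\<lambda>n. (1 - p) * (r/p)^n - (1 - r)) at_top sequentially"
    by (simp add: algebra_simps)
  show ?thesis unfolding Htail_def
    by (rule tendsto_divide_0[OF tendsto_const filterlim_at_top_imp_at_infinity[OF 3]])
qed

lemma Hprob_nonneg: "Hprob p r n \<ge> 0"
  unfolding Hprob_def using Htail_mono[of "n - 1" n] by auto

lemma Hprob_sum: "(\<Sum>i\<le>n. Hprob p r i) = 1 - Htail p r n"
  by (induction n) (auto simp: Hprob_def)

lemma Hprob_sums: "Hprob p r sums 1"
proof -
  have "(\<lambda>n. \<Sum>i\<le>n. Hprob p r i) \<longlonglongrightarrow> 1 - 0"
    unfolding Hprob_sum by (intro tendsto_diff tendsto_const Htail_lim)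
  then show ?thesis unfolding sums_def_le by simp
qed

lemma pmf_Hdist: "pmf (Hdist p r) n = Hprob p r n"
proof -
  have "(\<integral>\<^sup>+x. ennreal (Hprob p r x) \<partial>count_space UNIV) = 1"
    unfolding nn_integral_count_space_nat
    using suminf_ennreal_eq[OF Hprob_nonneg Hprob_sums] by simp
  then show ?thesis unfolding Hdist_def
    by (subst pmf_embed_pmf) (auto simp: Hprob_nonneg)
qed

lemma Hprob_0: "Hprob p r 0 = 0" by (simp add: Hprob_def)

abbreviation "D \<equiv> measure_pmf (Hdist p r)"

lemma measure_D_atMost: "measure D {..x} = 1 - Htail p r x"
  by (simp add: measure_measure_pmf_finite pmf_Hdist Hprob_sum)

lemma measure_D_gt: "measure D {x<..} = Htail p r x"
proof -
  have "measure D {x<..} = 1 - measure D {..x}"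
    by (subst measure_pmf.prob_compl[symmetric]) (auto intro!: arg_cong[where f="measure D"])
  then show ?thesis by (simp add: measure_D_atMost)
qed

end

context cpp begin

abbreviation "M \<equiv> stream_space D"

lemma prob_M: "prob_space M"
  by (rule prob_space.prob_space_stream_space[OF prob_space_measure_pmf])

lemma sets_M: "sets M = sets (stream_space (count_space UNIV))"
  by (rule sets_stream_space_cong) simp

lemma meas_stake[measurable]: "stake m \<in> measurable M (count_space UNIV)"
  using measurable_stake by (subst measurable_cong_sets[OF sets_M refl]) 

lemma meas_stake_fun: "(\<lambda>\<omega>. f (stake m \<omega>)) \<in> borel_measurable M"
  by (rule measurable_compose[OF meas_stake]) simp

lemma meas_sdrop_fun: "h \<in> borel_measurable M \<Longrightarrow> (\<lambda>\<omega>. h (sdrop m \<omega>)) \<in> borel_measurable M"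
  by (rule measurable_compose[OF measurable_sdrop])

lemma nn_M_Stream: "h \<in> borel_measurable M \<Longrightarrow>
  (\<integral>\<^sup>+\<omega>. h \<omega> \<partial>M) = (\<integral>\<^sup>+x. (\<integral>\<^sup>+\<omega>. h (x ## \<omega>) \<partial>M) \<partial>D)"
  by (rule prob_space.nn_integral_stream_space[OF prob_space_measure_pmf])

lemma emeasure_M_space[simp]: "emeasure M (space M) = 1"
  by (rule prob_space.emeasure_space_1[OF prob_M])

lemma nn_M_const: "(\<integral>\<^sup>+\<omega>. a \<partial>M) = a"
proof -
  have "emeasure M (space M) = 1" by (rule prob_space.emeasure_space_1[OF prob_M])
  then show ?thesis by (simp only: nn_integral_const mult_1_right)
qed

lemma split_stake_sdrop:
  assumes h: "h \<in> borel_measurable M"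
  shows "(\<integral>\<^sup>+\<omega>. f (stake m \<omega>) * h (sdrop m \<omega>) \<partial>M) = (\<integral>\<^sup>+\<omega>. f (stake m \<omega>) \<partial>M) * (\<integral>\<^sup>+\<omega>. h \<omega> \<partial>M)"
proof (induction m arbitrary: f)
  case 0
  then show ?case using h prob_space.emeasure_space_1[OF prob_M] by (simp add: nn_integral_cmult)
next
  case (Suc m)
  have "(\<integral>\<^sup>+\<omega>. f (stake (Suc m) \<omega>) * h (sdrop (Suc m) \<omega>) \<partial>M)
      = (\<integral>\<^sup>+x. (\<integral>\<^sup>+\<omega>. f (x # stake m \<omega>) * h (sdrop m \<omega>) \<partial>M) \<partial>D)"
  proof -
    have meas: "(\<lambda>\<omega>. f (stake (Suc m) \<omega>) * h (sdrop (Suc m) \<omega>)) \<in> borel_measurable M"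
      by (intro borel_measurable_times_ennreal meas_stake_fun meas_sdrop_fun h)
    show ?thesis using nn_M_Stream[OF meas] by simp
  qed
  also have "\<dots> = (\<integral>\<^sup>+x. (\<integral>\<^sup>+\<omega>. f (x # stake m \<omega>) \<partial>M) * (\<integral>\<^sup>+\<omega>. h \<omega> \<partial>M) \<partial>D)"
    using Suc.IH[of "\<lambda>l. f (_ # l)"] by simp
  also have "\<dots> = (\<integral>\<^sup>+x. (\<integral>\<^sup>+\<omega>. f (x # stake m \<omega>) \<partial>M) \<partial>D) * (\<integral>\<^sup>+\<omega>. h \<omega> \<partial>M)"
    by (rule nn_integral_multc) simp
  also have "(\<integral>\<^sup>+x. (\<integral>\<^sup>+\<omega>. f (x # stake m \<omega>) \<partial>M) \<partial>D) = (\<integral>\<^sup>+\<omega>. f (stake (Suc m) \<omega>) \<partial>M)"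
    using nn_M_Stream[OF meas_stake_fun[of f "Suc m"]] by simp
  finally show ?case .
qed

lemma nn_prod_stake:
  "(\<integral>\<^sup>+\<omega>. prod_list (map g (stake m \<omega>)) \<partial>M) = (\<integral>\<^sup>+x. g x \<partial>D) ^ m"
proof (induction m)
  case 0
  then show ?case by (simp add: nn_M_const prob_space.emeasure_space_1[OF prob_M])
next
  case (Suc m)
  have "(\<integral>\<^sup>+\<omega>. prod_list (map g (stake (Suc m) \<omega>)) \<partial>M)
     = (\<integral>\<^sup>+x. (\<integral>\<^sup>+\<omega>. g x * prod_list (map g (stake m \<omega>)) \<partial>M) \<partial>D)"
    using nn_M_Stream[OF meas_stake_fun[of "\<lambda>l. prod_list (map g l)" "Suc m"]] by simp
  also have "\<dots> = (\<integral>\<^sup>+x. g x * (\<integral>\<^sup>+x. g x \<partial>D) ^ m \<partial>D)"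
    by (subst nn_integral_cmult) (auto intro!: meas_stake_fun simp: Suc.IH)
  also have "\<dots> = (\<integral>\<^sup>+x. g x \<partial>D) ^ Suc m"
    by (subst nn_integral_multc) (auto simp: mult.commute)
  finally show ?case .
qed

lemma of_bool_all_prod: "(of_bool (\<forall>v\<in>set l. v \<in> A) :: ennreal) = prod_list (map (indicator A) l)"
  by (induction l) (simp_all add: indicator_def of_bool_conj)

lemma nn_all_stake:
  "(\<integral>\<^sup>+\<omega>. of_bool (\<forall>v\<in>set (stake m \<omega>). v \<in> A) \<partial>M) = emeasure D A ^ m"
proof -
  have "(\<lambda>\<omega>. of_bool (\<forall>v\<in>set (stake m \<omega>). v \<in> A) :: ennreal) = (\<lambda>\<omega>. prod_list (map (indicator A) (stake m \<omega>)))"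
    by (simp add: of_bool_all_prod)
  then show ?thesis by (simp add: nn_prod_stake)
qed

end

context cpp begin

definition "Fin \<omega> \<longleftrightarrow> (\<exists>i. T < \<omega> !! i)"

abbreviation "\<delta> \<equiv> Htail p r T"

lemma delta_pos: "\<delta> > 0" by (rule Htail_pos)
lemma delta_lt1: "\<delta> < 1" using T1 by (intro Htail_lt1) simp

lemma emeasure_D_atMost: "emeasure D {..x} = ennreal (1 - Htail p r x)"
  by (simp add: measure_pmf.emeasure_eq_measure measure_D_atMost)

lemma emeasure_D_gt: "emeasure D {x<..} = ennreal (Htail p r x)"
  by (simp add: measure_pmf.emeasure_eq_measure measure_D_gt)

lemma M_emeasure_eq: "emeasure M A = ennreal (measure M A)"
  using prob_space.finite_measure[OF prob_M] by (rule finite_measure.emeasure_eq_measure)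

lemma all_set_stake: "(\<forall>v\<in>set (stake m \<omega>). P v) \<longleftrightarrow> (\<forall>j<m. P (\<omega> !! j))"
proof -
  have "set (stake m \<omega>) = (\<lambda>j. \<omega> !! j) ` {..<m}"
    by (induction m) (simp_all add: stake_Suc lessThan_Suc del: stake.simps(2))
  then show ?thesis by auto
qed

lemma NT_char:
  assumes "Fin \<omega>"
  shows "NT T \<omega> = n \<longleftrightarrow> 1 \<le> n \<and> (\<forall>j<n-1. \<omega> !! j \<le> T) \<and> T < \<omega> !! (n-1)"
proof -
  obtain i where i: "T < \<omega> !! i" using assms Fin_def by auto
  define P where "P i \<longleftrightarrow> 1 \<le> i \<and> T < Hseq T \<omega> i" for i
  have P: "P (Suc i)" using i by (simp add: P_def Hseq_def)
  have NT: "NT T \<omega> = (LEAST i. P i)" by (simp add: NT_def P_def)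
  show ?thesis
  proof
    assume "NT T \<omega> = n"
    then have n: "n = (LEAST i. P i)" using NT by simp
    have Pn: "P n" unfolding n by (rule LeastI[of P, OF P])
    have nP: "\<not> P j" if "j < n" for j using not_less_Least[of j P] that n by simp
    have "\<omega> !! j \<le> T" if "j < n - 1" for j
    proof -
      have "Suc j < n" using that by simp
      then have "\<not> P (Suc j)" by (rule nP)
      then show ?thesis by (simp add: P_def Hseq_def)
    qed
    moreover have "1 \<le> n \<and> T < \<omega> !! (n-1)"
      using Pn unfolding P_def Hseq_def by (auto split: if_splits)
    ultimately show "1 \<le> n \<and> (\<forall>j<n-1. \<omega> !! j \<le> T) \<and> T < \<omega> !! (n-1)" by blast
  next
    assume h: "1 \<le> n \<and> (\<forall>j<n-1. \<omega> !! j \<le> T) \<and> T < \<omega> !! (n-1)"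
    have "(LEAST i. P i) = n"
    proof (rule Least_equality)
      show "P n" using h by (simp add: P_def Hseq_def)
      fix y assume y: "P y"
      show "n \<le> y"
      proof (rule ccontr)
        assume "\<not> n \<le> y"
        then have "y - 1 < n - 1" "1 \<le> y" using y by (auto simp: P_def)
        then have "\<omega> !! (y - 1) \<le> T" using h by blast
        then show False using y \<open>1 \<le> y\<close> by (simp add: P_def Hseq_def)
      qed
    qed
    then show "NT T \<omega> = n" using NT by simp
  qed
qed

lemma NT_ge:
  assumes "Fin \<omega>" "1 \<le> k"
  shows "k \<le> NT T \<omega> \<longleftrightarrow> (\<forall>j<k-1. \<omega> !! j \<le> T)"
proof -
  define n where "n = NT T \<omega>"
  have h: "1 \<le> n \<and> (\<forall>j<n-1. \<omega> !! j \<le> T) \<and> T < \<omega> !! (n-1)"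
    using NT_char[OF assms(1), of n] n_def by simp
  show ?thesis unfolding n_def[symmetric]
  proof
    assume "k \<le> n" then show "\<forall>j<k-1. \<omega> !! j \<le> T" using h by auto
  next
    assume a: "\<forall>j<k-1. \<omega> !! j \<le> T"
    show "k \<le> n"
    proof (rule ccontr)
      assume "\<not> k \<le> n"
      then have "n - 1 < k - 1" using h by linarith
      then show False using a h by fastforce
    qed
  qed
qed

lemma meas_snth_M[measurable]: "(\<lambda>\<omega>. \<omega> !! i) \<in> measurable M (count_space UNIV)"
  using measurable_snth[of i D] by (simp add: measurable_cong_sets)

lemma meas_NT[measurable]: "NT T \<in> measurable M (count_space UNIV)"
proof -
  have "(\<lambda>\<omega>. 1 \<le> i \<and> T < Hseq T \<omega> i) \<in> measurable M (count_space UNIV)" for i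
  proof (cases i)
    case 0 then show ?thesis by simp
  next
    case (Suc j)
    have "(\<lambda>\<omega>. T < \<omega> !! j) \<in> measurable M (count_space UNIV)"
      by (rule measurable_compose[OF meas_snth_M]) simp
    then show ?thesis using Suc by (simp add: Hseq_def)
  qed
  then show ?thesis unfolding NT_def[abs_def] by (rule measurable_Least)
qed

lemma meas_Fin[measurable]: "Measurable.pred M Fin"
  unfolding Fin_def by measurable

lemma AE_Fin: "AE \<omega> in M. Fin \<omega>"
proof -
  let ?A = "{\<omega> \<in> space M. \<not> Fin \<omega>}"
  have A: "?A \<in> sets M" by measurable
  have le: "measure M ?A \<le> (1 - \<delta>) ^ m" for m
  proof -
    have "emeasure M ?A \<le> (\<integral>\<^sup>+\<omega>. of_bool (\<forall>v\<in>set (stake m \<omega>). v \<in> {..T}) \<partial>M)"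
      unfolding nn_integral_indicator[OF A, symmetric]
      by (intro nn_integral_mono) (auto simp: Fin_def indicator_def in_set_conv_nth not_less)
    also have "\<dots> = ennreal ((1 - \<delta>) ^ m)"
      using delta_lt1 by (simp only: nn_all_stake emeasure_D_atMost ennreal_power)
    finally show ?thesis
      using delta_lt1 by (simp add: M_emeasure_eq)
  qed
  have "(\<lambda>m. (1 - \<delta>) ^ m) \<longlonglongrightarrow> 0"
    using delta_lt1 delta_pos by (intro LIMSEQ_realpow_zero) auto
  then have "measure M ?A \<le> 0"
    using le by (intro LIMSEQ_le_const) auto
  then have "measure M ?A = 0" by (simp add: measure_le_0_iff)
  then show ?thesis
    using A by (intro AE_I[where N="?A"]) (auto simp: M_emeasure_eq)
qed

lemma denom:
  assumes "1 \<le> k"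
  shows "measure M {\<omega> \<in> space M. k \<le> NT T \<omega>} = (1 - \<delta>) ^ (k - 1)"
proof -
  have "measure M {\<omega> \<in> space M. k \<le> NT T \<omega>} = measure M {\<omega> \<in> space M. \<forall>v\<in>set (stake (k-1) \<omega>). v \<in> {..T}}"
    using AE_Fin
    by (intro measure_eq_AE) (auto elim!: eventually_mono simp: NT_ge[OF _ assms] all_set_stake)
  also have "emeasure M {\<omega> \<in> space M. \<forall>v\<in>set (stake (k-1) \<omega>). v \<in> {..T}} = ennreal ((1 - \<delta>) ^ (k-1))"
  proof -
    let ?B = "{\<omega> \<in> space M. \<forall>v\<in>set (stake (k-1) \<omega>). v \<in> {..T}}"
    have B: "?B \<in> sets M" by measurable
    have "emeasure M ?B = (\<integral>\<^sup>+\<omega>. indicator ?B \<omega> \<partial>M)" using B by simp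
    also have "\<dots> = (\<integral>\<^sup>+\<omega>. of_bool (\<forall>v\<in>set (stake (k-1) \<omega>). v \<in> {..T}) \<partial>M)"
      by (intro nn_integral_cong) (auto simp: indicator_def space_stream_space)
    also have "\<dots> = emeasure D {..T} ^ (k-1)" by (rule nn_all_stake)
    finally show ?thesis using delta_lt1 by (simp add: emeasure_D_atMost ennreal_power)
  qed
  then have "measure M {\<omega> \<in> space M. \<forall>v\<in>set (stake (k-1) \<omega>). v \<in> {..T}} = (1 - \<delta>) ^ (k-1)"
    using delta_lt1 by (simp add: M_emeasure_eq)
  finally show ?thesis .
qed

end

fun tipsl :: "nat \<Rightarrow> nat list \<Rightarrow> nat list" where
  "tipsl a [] = [a]"
| "tipsl a (g # gs) = a # tipsl (a + g) gs"

fun diffs :: "nat list \<Rightarrow> nat list" where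
  "diffs (x # y # l) = (y - x) # diffs (y # l)"
| "diffs _ = []"

definition "Phi = (\<lambda>(a, gs, b). (a + sum_list gs + b + 1, set (tipsl a gs)))"

definition "Lam K = {(a, gs, b). length gs = K \<and> (\<forall>g\<in>set gs. 0 < g)}"

definition "Om k = {(n, S). S \<in> ksubsets n k}"

lemma tipsl_length[simp]: "length (tipsl a gs) = Suc (length gs)"
  by (induction gs arbitrary: a) auto

lemma tipsl_ge: "v \<in> set (tipsl a gs) \<Longrightarrow> a \<le> v"
  by (induction gs arbitrary: a) force+

lemma tipsl_le: "v \<in> set (tipsl a gs) \<Longrightarrow> v \<le> a + sum_list gs"
  by (induction gs arbitrary: a) force+

lemma tipsl_sorted: "\<forall>g\<in>set gs. 0 < g \<Longrightarrow> sorted_wrt (<) (tipsl a gs)"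
proof (induction gs arbitrary: a)
  case Nil then show ?case by simp
next
  case (Cons g gs)
  then show ?case using tipsl_ge[of _ "a + g" gs] by fastforce
qed

lemma tipsl_nth: "i \<le> length gs \<Longrightarrow> tipsl a gs ! i = a + sum_list (take i gs)"
proof (induction gs arbitrary: a i)
  case Nil then show ?case by simp
next
  case (Cons g gs)
  then show ?case by (cases i) auto
qed

lemma tipsl_ne[simp]: "tipsl a gs \<noteq> []" "[] \<noteq> tipsl a gs"
  by (cases gs; simp)+

lemma tipsl_inj: "tipsl a gs = tipsl a' gs' \<Longrightarrow> a = a' \<and> gs = gs'"
proof (induction gs arbitrary: a a' gs')
  case Nil then show ?case by (cases gs') auto
next
  case (Cons g gs)
  show ?case
  proof (cases gs')
    case Nil then show ?thesis using Cons.prems by simp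
  next
    case (Cons g' l)
    then have "a = a'" "tipsl (a + g) gs = tipsl (a' + g') l" using Cons.prems by auto
    then show ?thesis using Cons.IH[of "a + g" "a' + g'" l] Cons by simp
  qed
qed

lemma tipsl_diffs: "sorted_wrt (<) (x # l) \<Longrightarrow> tipsl x (diffs (x # l)) = x # l"
proof (induction l arbitrary: x)
  case Nil then show ?case by simp
next
  case (Cons y l)
  then have "x < y" by simp
  then show ?case using Cons by simp
qed

lemma diffs_length: "length (diffs (x # l)) = length l"
  by (induction l arbitrary: x) auto

lemma diffs_pos: "sorted_wrt (<) (x # l) \<Longrightarrow> \<forall>g\<in>set (diffs (x # l)). 0 < g"
  by (induction l arbitrary: x) auto

lemma sorted_list_tipsl: "\<forall>g\<in>set gs. 0 < g \<Longrightarrow> sorted_list_of_set (set (tipsl a gs)) = tipsl a gs"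
  using tipsl_sorted by (simp add: sorted_list_of_set.idem_if_sorted_distinct strict_sorted_iff)

lemma card_tipsl: "\<forall>g\<in>set gs. 0 < g \<Longrightarrow> card (set (tipsl a gs)) = Suc (length gs)"
  using tipsl_sorted[of gs a] by (simp add: strict_sorted_iff distinct_card)

lemma Phi_bij:
  assumes "1 \<le> k"
  shows "bij_betw Phi (Lam (k - 1)) (Om k)"
proof (rule bij_betwI')
  fix x y :: "nat \<times> nat list \<times> nat" assume x: "x \<in> Lam (k - 1)" and y: "y \<in> Lam (k - 1)"
  obtain a gs b where xe: "x = (a, gs, b)" by (cases x) auto
  obtain a' gs' b' where ye: "y = (a', gs', b')" by (cases y) auto
  show "Phi x = Phi y \<longleftrightarrow> x = y"
  proof
    assume eq: "Phi x = Phi y"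
    then have "set (tipsl a gs) = set (tipsl a' gs')" by (simp add: xe ye Phi_def)
    moreover have "\<forall>g\<in>set gs. 0 < g" "\<forall>g\<in>set gs'. 0 < g" using x y xe ye by (auto simp: Lam_def)
    ultimately have "tipsl a gs = tipsl a' gs'"
      using sorted_list_tipsl by metis
    then have "a = a' \<and> gs = gs'" by (rule tipsl_inj)
    then show "x = y" using eq by (simp add: xe ye Phi_def)
  qed simp
next
  fix x :: "nat \<times> nat list \<times> nat" assume x: "x \<in> Lam (k - 1)"
  obtain a gs b where xe: "x = (a, gs, b)" by (cases x) auto
  have gs: "length gs = k - 1" "\<forall>g\<in>set gs. 0 < g" using x xe by (auto simp: Lam_def)
  have "set (tipsl a gs) \<subseteq> {..< a + sum_list gs + b + 1}"
    using tipsl_le by fastforce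
  moreover have "card (set (tipsl a gs)) = k" using card_tipsl[OF gs(2)] gs(1) assms by simp
  ultimately show "Phi x \<in> Om k" by (simp add: xe Phi_def Om_def ksubsets_def)
next
  fix y :: "nat \<times> nat set" assume y: "y \<in> Om k"
  obtain n S where ye: "y = (n, S)" by (cases y) auto
  have S: "S \<subseteq> {..<n}" "card S = k" using y ye by (auto simp: Om_def ksubsets_def)
  have fin: "finite S" using S(1) finite_subset by blast
  define L where "L = sorted_list_of_set S"
  have L: "sorted_wrt (<) L" "set L = S" "length L = k"
    using fin S by (auto simp: L_def)
  obtain x l where xl: "L = x # l" using L(3) assms by (cases L) auto
  define gs where "gs = diffs L"
  have tl: "tipsl x gs = L" using tipsl_diffs L(1) xl gs_def by simp
  have gs: "length gs = k - 1" "\<forall>g\<in>set gs. 0 < g"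
    using diffs_length diffs_pos L xl gs_def by auto
  have last: "x + sum_list gs < n"
  proof -
    have "tipsl x gs ! length gs \<in> set (tipsl x gs)"
      by (rule nth_mem) simp
    then have "x + sum_list gs \<in> set (tipsl x gs)"
      using tipsl_nth[of "length gs" gs x] by simp
    then show ?thesis using tl L(2) S(1) by auto
  qed
  define b where "b = n - 1 - (x + sum_list gs)"
  have "Phi (x, gs, b) = y" using last tl L(2) by (simp add: Phi_def b_def ye)
  moreover have "(x, gs, b) \<in> Lam (k - 1)" using gs by (simp add: Lam_def)
  ultimately show "\<exists>x'\<in>Lam (k - 1). y = Phi x'" by metis
qed

fun Rev :: "nat \<Rightarrow> nat list \<Rightarrow> nat list \<Rightarrow> nat \<Rightarrow> nat stream \<Rightarrow> bool" where
  "Rev T [] [] b \<omega> = ((\<forall>v\<in>set (stake b \<omega>). v \<le> T) \<and> T < \<omega> !! b)"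
| "Rev T (g # gs) (x # xs) b \<omega> = (x \<le> T \<and> Max (set (stake g \<omega>)) = x \<and> Rev T gs xs b (sdrop g \<omega>))"
| "Rev T _ _ b \<omega> = False"

definition "Eev T a gs xs b \<omega> = ((\<forall>v\<in>set (stake a \<omega>). v \<le> T) \<and> Rev T gs xs b (sdrop a \<omega>))"

fun QL :: "(nat \<Rightarrow> nat \<Rightarrow> real) \<Rightarrow> nat list \<Rightarrow> nat list \<Rightarrow> real" where
  "QL f (g # gs) (x # xs) = f g x * QL f gs xs"
| "QL f _ _ = 1"

lemma set_stake_img: "set (stake m \<omega>) = (\<lambda>j. \<omega> !! j) ` {..<m}"
  by (induction m) (simp_all add: stake_Suc lessThan_Suc del: stake.simps(2))

lemma Max_stake_le: "0 < g \<Longrightarrow> Max (set (stake g \<omega>)) \<le> T \<longleftrightarrow> (\<forall>j<g. \<omega> !! j \<le> T)"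
  unfolding set_stake_img
proof safe
  fix j assume "Max ((!!) \<omega> ` {..<g}) \<le> T" "j < g"
  moreover have "\<omega> !! j \<le> Max ((!!) \<omega> ` {..<g})" using \<open>j < g\<close> by (intro Max_ge) auto
  ultimately show "\<omega> !! j \<le> T" by (meson order_trans)
next
  assume "0 < g" "\<forall>j<g. \<omega> !! j \<le> T"
  then show "Max ((!!) \<omega> ` {..<g}) \<le> T" by (intro Max.boundedI) auto
qed

lemma all_less_add: fixes g X :: nat shows "(\<forall>j<g + X. P j) \<longleftrightarrow> (\<forall>j<g. P j) \<and> (\<forall>j<X. P (g + j))"
proof safe
  fix j assume h: "\<forall>j<g. P j" "\<forall>j<X. P (g + j)" "j < g + X"
  show "P j"
  proof (cases "j < g")
    case True then show ?thesis using h by simp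
  next
    case False
    then have "j = g + (j - g)" "j - g < X" using h(3) by auto
    then show ?thesis using h(2) by metis
  qed
qed auto

lemma Rev_char:
  assumes "length gs = length xs" "\<forall>g\<in>set gs. 0 < g"
  shows "Rev T gs xs b \<omega> \<longleftrightarrow> (\<forall>j < sum_list gs + b. \<omega> !! j \<le> T) \<and> T < \<omega> !! (sum_list gs + b) \<and>
     (\<forall>i<length gs. Max (set (stake (gs ! i) (sdrop (sum_list (take i gs)) \<omega>))) = xs ! i)"
  using assms
proof (induction gs xs arbitrary: \<omega> rule: list_induct2)
  case Nil
  then show ?case by (auto simp: set_stake_img)
next
  case (Cons g gs x xs)
  have g: "0 < g" and gs: "\<forall>g\<in>set gs. 0 < g" using Cons.prems by auto
  let ?w = "sdrop g \<omega>"
  have IH: "Rev T gs xs b ?w \<longleftrightarrow> (\<forall>j < sum_list gs + b. \<omega> !! (g + j) \<le> T) \<and> T < \<omega> !! (g + (sum_list gs + b)) \<and>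
     (\<forall>i<length gs. Max (set (stake (gs ! i) (sdrop (g + sum_list (take i gs)) \<omega>))) = xs ! i)"
    using Cons.IH[OF gs, of ?w] by (simp add: sdrop_snth)
  have split: "(\<forall>j < g + (sum_list gs + b). \<omega> !! j \<le> T) \<longleftrightarrow>
      (\<forall>j<g. \<omega> !! j \<le> T) \<and> (\<forall>j < sum_list gs + b. \<omega> !! (g + j) \<le> T)"
    by (rule all_less_add)
  have maxs: "(\<forall>i<Suc (length gs). Max (set (stake ((g # gs) ! i) (sdrop (sum_list (take i (g # gs))) \<omega>))) = (x # xs) ! i)
     \<longleftrightarrow> Max (set (stake g \<omega>)) = x \<and> (\<forall>i<length gs. Max (set (stake (gs ! i) (sdrop (g + sum_list (take i gs)) \<omega>))) = xs ! i)"
    unfolding All_less_Suc2 by simp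
  show ?case
    unfolding Rev.simps IH sum_list.Cons length_Cons maxs add.assoc split
    using Max_stake_le[OF g, of \<omega>] by auto
qed

lemma Hseq_img: "Hseq T \<omega> ` {t + 1 .. t + g} = set (stake g (sdrop t \<omega>))"
  unfolding set_stake_img sdrop_snth
proof (intro equalityI subsetI)
  fix v assume "v \<in> Hseq T \<omega> ` {t + 1 .. t + g}"
  then obtain i where i: "t + 1 \<le> i" "i \<le> t + g" "v = Hseq T \<omega> i" by auto
  then have "v = \<omega> !! (t + (i - Suc t))" "i - Suc t < g" by (auto simp: Hseq_def)
  then show "v \<in> (\<lambda>j. \<omega> !! (t + j)) ` {..<g}" by blast
next
  fix v assume "v \<in> (\<lambda>j. \<omega> !! (t + j)) ` {..<g}"
  then obtain j where j: "j < g" "v = \<omega> !! (t + j)" by auto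
  then have "v = Hseq T \<omega> (Suc (t + j))" "Suc (t + j) \<in> {t + 1 .. t + g}" by (auto simp: Hseq_def)
  then show "v \<in> Hseq T \<omega> ` {t + 1 .. t + g}" by blast
qed

lemma map_upt_eq: "length xs = K \<Longrightarrow> map f [1..<Suc K] = xs \<longleftrightarrow> (\<forall>i<K. f (i + 1) = xs ! i)"
proof -
  assume xs: "length xs = K"
  have "map f [1..<Suc K] = xs \<longleftrightarrow> (\<forall>i<K. map f [1..<Suc K] ! i = xs ! i)"
    using xs by (simp del: upt_Suc add: list_eq_iff_nth_eq)
  also have "\<dots> \<longleftrightarrow> (\<forall>i<K. f (i + 1) = xs ! i)"
    by (intro all_cong) (simp del: upt_Suc add: add.commute)
  finally show ?thesis .
qed

context cpp begin

lemma Fin_NT: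
  "(Fin \<omega> \<and> NT T \<omega> = Suc m) \<longleftrightarrow> (\<forall>j<m. \<omega> !! j \<le> T) \<and> T < \<omega> !! m"
proof
  assume "Fin \<omega> \<and> NT T \<omega> = Suc m" then show "(\<forall>j<m. \<omega> !! j \<le> T) \<and> T < \<omega> !! m"
    using NT_char[of \<omega> "Suc m"] by simp
next
  assume h: "(\<forall>j<m. \<omega> !! j \<le> T) \<and> T < \<omega> !! m"
  then have "Fin \<omega>" by (auto simp: Fin_def)
  then show "Fin \<omega> \<and> NT T \<omega> = Suc m" using NT_char[of \<omega> "Suc m"] h by simp
qed

lemma Ev_equiv:
  assumes lam: "(a, gs, b) \<in> Lam K" and xs: "length xs = K"
  shows "(Fin \<omega> \<and> NT T \<omega> = fst (Phi (a, gs, b)) \<and> sampled_depths T \<omega> (snd (Phi (a, gs, b))) = T # xs)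
    \<longleftrightarrow> Eev T a gs xs b \<omega>"
proof -
  have gs: "length gs = K" "\<forall>g\<in>set gs. 0 < g" using lam by (auto simp: Lam_def)
  define S where "S = set (tipsl a gs)"
  have cardS: "card S = Suc K" using card_tipsl[OF gs(2)] gs(1) S_def by simp
  have tip: "tip S i = a + sum_list (take i gs)" if "i \<le> K" for i
    using that gs by (simp add: tip_def S_def sorted_list_tipsl tipsl_nth)
  have blk: "Hseq T \<omega> ` {tip S i + 1 .. tip S (Suc i)} = set (stake (gs ! i) (sdrop (a + sum_list (take i gs)) \<omega>))"
    if "i < K" for i
  proof -
    have "tip S (Suc i) = (a + sum_list (take i gs)) + gs ! i"
      using tip[of "Suc i"] that gs by (simp add: take_Suc_conv_app_nth)
    then show ?thesis using tip[of i] that Hseq_img by simp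
  qed
  have sd: "sampled_depths T \<omega> S = T # xs \<longleftrightarrow>
      (\<forall>i<K. Max (set (stake (gs ! i) (sdrop (a + sum_list (take i gs)) \<omega>))) = xs ! i)"
  proof -
    have "sampled_depths T \<omega> S = T # xs \<longleftrightarrow>
        (\<forall>i<K. Max (Hseq T \<omega> ` {tip S i + 1 .. tip S (Suc i)}) = xs ! i)"
      unfolding sampled_depths_def cardS list.inject using map_upt_eq[OF xs] by simp
    then show ?thesis using blk by simp
  qed
  have E: "Eev T a gs xs b \<omega> \<longleftrightarrow> (\<forall>j < a + (sum_list gs + b). \<omega> !! j \<le> T) \<and> T < \<omega> !! (a + (sum_list gs + b)) \<and>
     (\<forall>i<K. Max (set (stake (gs ! i) (sdrop (a + sum_list (take i gs)) \<omega>))) = xs ! i)"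
  proof -
    have split: "(\<forall>j < a + (sum_list gs + b). \<omega> !! j \<le> T) \<longleftrightarrow>
      (\<forall>j<a. \<omega> !! j \<le> T) \<and> (\<forall>j < sum_list gs + b. \<omega> !! (a + j) \<le> T)"
      by (rule all_less_add)
    show ?thesis
      unfolding Eev_def Rev_char[OF _ gs(2)[unfolded gs(1)[symmetric]], of xs, unfolded gs(1) xs, simplified]
      unfolding split using gs(1) by (simp add: all_set_stake sdrop_snth)
  qed
  have P: "fst (Phi (a, gs, b)) = Suc (a + (sum_list gs + b))" "snd (Phi (a, gs, b)) = S"
    by (simp_all add: Phi_def S_def)
  show ?thesis unfolding P E sd using Fin_NT[of \<omega> "a + (sum_list gs + b)"] by blast
qed

end

context cpp begin

definition "qr g x = (if x \<le> T then (1 - Htail p r x) ^ g - (1 - Htail p r (x - 1)) ^ g else 0)"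

lemma Fu_mono: "i \<le> j \<Longrightarrow> 1 - Htail p r i \<le> 1 - Htail p r j"
  using Htail_mono by simp

lemma qr_nonneg: "qr g x \<ge> 0"
  unfolding qr_def using Fu_mono[of "x - 1" x] Htail_le1[of "x - 1"]
  by (auto intro!: power_mono)

lemma meas_pred_stake: "Measurable.pred M (\<lambda>\<omega>. Q (stake m \<omega>))"
  by (rule measurable_compose[OF meas_stake]) simp

lemma Rev_nil_stake: "Rev T [] [] b \<omega> = (\<lambda>l. (\<forall>v\<in>set (butlast l). v \<le> T) \<and> T < last l) (stake (Suc b) \<omega>)"
  by (simp add: stake_Suc del: stake.simps(2))

lemma meas_Rev: "Measurable.pred M (Rev T gs xs b)"
proof (induction gs arbitrary: xs)
  case Nil
  show ?case
  proof (cases xs)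
    case Nil
    show ?thesis unfolding Nil Rev_nil_stake by (rule meas_pred_stake)
  qed simp
next
  case (Cons g gs)
  show ?case
  proof (cases xs)
    case (Cons x xs')
    have 1: "Measurable.pred M (\<lambda>\<omega>. Rev T gs xs' b (sdrop g \<omega>))"
      by (rule measurable_compose[OF measurable_sdrop Cons.IH])
    have 2: "Measurable.pred M (\<lambda>\<omega>. Max (set (stake g \<omega>)) = x)"
      by (rule meas_pred_stake[where Q="\<lambda>l. Max (set l) = x"])
    have 3: "Measurable.pred M (\<lambda>\<omega>. x \<le> T)" by simp
    show ?thesis unfolding Cons Rev.simps
      by (rule pred_intros_logic(3)[OF 3 pred_intros_logic(3)[OF 2 1]])
  qed simp
qed

lemma meas_of_bool: "Measurable.pred M P \<Longrightarrow> (\<lambda>\<omega>. of_bool (P \<omega>) :: ennreal) \<in> borel_measurable M"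
  by (rule measurable_compose[where N="count_space UNIV"]) auto

lemma nn_all_le: "(\<integral>\<^sup>+\<omega>. of_bool (\<forall>v\<in>set (stake g \<omega>). v \<le> y) \<partial>M) = ennreal ((1 - Htail p r y) ^ g)"
proof -
  have "(\<integral>\<^sup>+\<omega>. of_bool (\<forall>v\<in>set (stake g \<omega>). v \<le> y) \<partial>M) = emeasure D {..y} ^ g"
    using nn_all_stake[of g "{..y}"] by simp
  then show ?thesis using Htail_le1[of y] by (simp add: emeasure_D_atMost ennreal_power)
qed

lemma Max_set_le: "l \<noteq> [] \<Longrightarrow> (\<forall>v\<in>set l. v \<le> y) \<longleftrightarrow> Max (set l) \<le> (y::nat)"
  by (simp add: Max_le_iff)

lemma le_Max_set: "v \<in> set l \<Longrightarrow> v \<le> Max (set l)"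
  by (rule Max_ge) auto

lemma P_block:
  assumes g: "0 < g"
  shows "(\<integral>\<^sup>+\<omega>. of_bool (x \<le> T \<and> Max (set (stake g \<omega>)) = x) \<partial>M) = ennreal (qr g x)"
proof (cases "x \<le> T")
  case False then show ?thesis by (simp add: qr_def)
next
  case xT: True
  have ne: "stake g \<omega> \<noteq> []" for \<omega> using g by simp
  show ?thesis
  proof (cases x)
    case 0
    have "(\<integral>\<^sup>+\<omega>. of_bool (x \<le> T \<and> Max (set (stake g \<omega>)) = x) \<partial>M)
        \<le> (\<integral>\<^sup>+\<omega>. of_bool (\<forall>v\<in>set (stake g \<omega>). v \<le> 0) \<partial>M)"
      by (intro nn_integral_mono) (force simp: 0 dest: le_Max_set)
    also have "\<dots> = 0" unfolding nn_all_le using g by simp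
    finally show ?thesis using g by (simp add: 0 qr_def)
  next
    case (Suc x')
    have pt: "(of_bool (\<forall>v\<in>set (stake g \<omega>). v \<le> x) :: ennreal)
      = of_bool (x \<le> T \<and> Max (set (stake g \<omega>)) = x) + of_bool (\<forall>v\<in>set (stake g \<omega>). v \<le> x')" for \<omega>
      unfolding Max_set_le[OF ne] using xT Suc
      by (cases "Max (set (stake g \<omega>)) = x") auto
    let ?I = "(\<integral>\<^sup>+\<omega>. of_bool (x \<le> T \<and> Max (set (stake g \<omega>)) = x) \<partial>M)"
    have "(\<integral>\<^sup>+\<omega>. of_bool (\<forall>v\<in>set (stake g \<omega>). v \<le> x) \<partial>M) = ?I
       + (\<integral>\<^sup>+\<omega>. of_bool (\<forall>v\<in>set (stake g \<omega>). v \<le> x') \<partial>M)"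
      unfolding pt
      by (rule nn_integral_add) (auto intro!: meas_stake_fun)
    then have eq: "ennreal ((1 - Htail p r x) ^ g) = ?I + ennreal ((1 - Htail p r x') ^ g)"
      by (simp only: nn_all_le)
    have "?I = ennreal ((1 - Htail p r x) ^ g) - ennreal ((1 - Htail p r x') ^ g)"
      unfolding eq by (rule ennreal_add_diff_cancel_right[symmetric]) simp
    also have "\<dots> = ennreal ((1 - Htail p r x) ^ g - (1 - Htail p r x') ^ g)"
      using Htail_le1[of x'] by (subst ennreal_minus) auto
    finally show ?thesis using xT Suc by (simp add: qr_def)
  qed
qed

lemma P_gt: "(\<integral>\<^sup>+\<omega>. of_bool (T < shd \<omega>) \<partial>M) = ennreal \<delta>"
proof -
  have "(\<integral>\<^sup>+\<omega>. of_bool (T < shd \<omega>) \<partial>M) = (\<integral>\<^sup>+x. (\<integral>\<^sup>+\<omega>. of_bool (T < x) \<partial>M) \<partial>D)"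
    by (subst nn_M_Stream) (auto intro!: meas_of_bool measurable_compose[OF meas_snth_M[of 0]])
  also have "\<dots> = (\<integral>\<^sup>+x. indicator {T<..} x \<partial>D)"
    by (simp add: nn_M_const indicator_def)
  also have "\<dots> = ennreal \<delta>" by (simp add: emeasure_D_gt)
  finally show ?thesis .
qed

lemma P_Rev:
  assumes "length gs = length xs" "\<forall>g\<in>set gs. 0 < g"
  shows "(\<integral>\<^sup>+\<omega>. of_bool (Rev T gs xs b \<omega>) \<partial>M) = ennreal (QL qr gs xs * ((1 - \<delta>) ^ b * \<delta>))"
  using assms
proof (induction gs xs rule: list_induct2)
  case Nil
  have "(\<integral>\<^sup>+\<omega>. of_bool (Rev T [] [] b \<omega>) \<partial>M)
     = (\<integral>\<^sup>+\<omega>. of_bool (\<forall>v\<in>set (stake b \<omega>). v \<le> T) * of_bool (T < sdrop b \<omega> !! 0) \<partial>M)"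
    by (simp add: sdrop_snth of_bool_conj)
  also have "\<dots> = ennreal ((1 - \<delta>) ^ b) * ennreal \<delta>"
    by (subst split_stake_sdrop) (auto intro!: meas_of_bool measurable_compose[OF meas_snth_M[of 0]] simp: nn_all_le P_gt)
  finally show ?case using delta_pos delta_lt1 by (simp add: ennreal_mult)
next
  case (Cons g gs x xs)
  have g: "0 < g" and gs: "\<forall>g\<in>set gs. 0 < g" using Cons.prems by auto
  have "(\<integral>\<^sup>+\<omega>. of_bool (Rev T (g # gs) (x # xs) b \<omega>) \<partial>M)
     = (\<integral>\<^sup>+\<omega>. of_bool (x \<le> T \<and> Max (set (stake g \<omega>)) = x) * of_bool (Rev T gs xs b (sdrop g \<omega>)) \<partial>M)"
    by (simp add: of_bool_conj mult.assoc)
  also have "\<dots> = ennreal (qr g x) * ennreal (QL qr gs xs * ((1 - \<delta>) ^ b * \<delta>))"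
    by (subst split_stake_sdrop) (auto intro!: meas_of_bool meas_Rev simp: P_block[OF g] Cons.IH[OF gs])
  finally show ?case using qr_nonneg[of g x] by (simp add: ennreal_mult'[symmetric] mult.assoc)
qed

end

lemma alg_cancel:
  fixes q A B c y :: real
  assumes "q \<noteq> 0"
  shows "A / B * ((c + y * q * B) / (c + y * q * A)) = (q * A) * (c + y * (q * B)) / ((q * B) * (c + y * (q * A)))"
proof -
  have "(q * A) * (c + y * (q * B)) / ((q * B) * (c + y * (q * A))) = ((q * A) / (q * B)) * ((c + y * q * B) / (c + y * q * A))"
    by (simp add: mult.assoc)
  also have "(q * A) / (q * B) = A / B" using assms by simp
  finally show ?thesis by simp
qed

lemma divz: "(z::real) \<noteq> 0 \<Longrightarrow> (x / z) / (w / z) = x / w"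
  by (cases "w = 0") (simp_all add: field_simps)

lemma alg_GG:
  fixes U V C y :: real
  assumes "C > 0" "V > 0" "U \<ge> 0" "0 < y" "y < 1"
  shows "U * (C + y * V) / (V * (C + y * U)) =
    (1 - (1 - C / (V + C)) * (1 - y)) * (U / (U + C)) / ((1 - C / (V + C)) * (1 - (1 - y) * (U / (U + C))))"
proof -
  have yU: "y * U \<ge> 0" using assms by simp
  have nz: "V + C \<noteq> 0" "U + C \<noteq> 0" "C + y * U \<noteq> 0" "V \<noteq> 0"
    using assms yU by linarith+
  have a: "1 - C / (V + C) = V / (V + C)" using nz by (simp add: field_simps)
  have b: "1 - V / (V + C) * (1 - y) = (C + y * V) / (V + C)" using nz by (simp add: field_simps)
  have c: "1 - (1 - y) * (U / (U + C)) = (C + y * U) / (U + C)" using nz by (simp add: field_simps)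
  have z: "(V + C) * (U + C) \<noteq> 0" using nz by simp
  have "(C + y * V) / (V + C) * (U / (U + C)) = ((C + y * V) * U) / ((V + C) * (U + C))" by simp
  moreover have "V / (V + C) * ((C + y * U) / (U + C)) = (V * (C + y * U)) / ((V + C) * (U + C))" by simp
  ultimately show ?thesis unfolding a b c divz[OF z] using nz by (simp add: mult.commute)
qed

lemma alg_Hy:
  fixes U V C y :: real
  assumes "C > 0" "V > 0" "U \<ge> 0" "0 < y"
  shows "U * (C + y * V) / (V * (C + y * U)) = (1 - C / (y * U + C)) / (1 - C / (y * V + C))"
proof -
  have yU: "y * U \<ge> 0" "y * V > 0" using assms by simp_all
  have nz: "y * U + C \<noteq> 0" "y * V + C \<noteq> 0" "y \<noteq> 0" "V \<noteq> 0"
    using assms yU by linarith+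
  have a: "1 - C / (y * U + C) = y * U / (y * U + C)" using nz by (simp add: field_simps)
  have b: "1 - C / (y * V + C) = y * V / (y * V + C)" using nz by (simp add: field_simps)
  have "(y * U / (y * U + C)) / (y * V / (y * V + C)) = (y * (U * (y * V + C))) / (y * (V * (y * U + C)))"
    using nz by (simp add: field_simps)
  also have "\<dots> = U * (C + y * V) / (V * (C + y * U))"
    using nz by (subst mult_divide_mult_cancel_left) (simp_all add: algebra_simps)
  finally show ?thesis unfolding a b ..
qed

context cpp begin

definition "GG y j = u j * (cc + y * u T) / (u T * (cc + y * u j))"

lemma uT_pos: "u T > 0" using T1 by (intro u_pos) simp

lemma u_alt: "(1 - p) * ((r/p)^j - 1) = u j" by (simp add: u_def)

lemma Gcdf_GG:
  assumes "j \<le> T" "0 < y"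
  shows "Gcdf p r T y j = GG y j"
proof -
  have gen: "((r / p) ^ j - 1) / ((r / p) ^ T - 1) *
       ((r - p + y * (1 - p) * ((r / p) ^ T - 1)) / (r - p + y * (1 - p) * ((r / p) ^ j - 1))) = GG y j"
    unfolding GG_def u_def using alg_cancel[of "1 - p"] p1 by simp
  show ?thesis
  proof (cases "j = 0")
    case True then show ?thesis by (simp add: Gcdf_def GG_def u_def)
  next
    case False
    show ?thesis
    proof (cases "T \<le> j")
      case True
      then have "j = T" using assms by simp
      moreover have "cc + y * u T > 0" using uT_pos cc_pos assms by (simp add: add_pos_pos)
      ultimately show ?thesis using False uT_pos
        by (simp add: Gcdf_def GG_def)
    next
      case F2: False
      then show ?thesis using False gen by (simp add: Gcdf_def)
    qed
  qed
qed

lemma Fu_u: "1 - Htail p r j = u j / (u j + cc)"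
  using cc_pos u_nonneg[of j] by (simp add: Htail_u field_simps)

definition "psi y x = (if x \<le> T then (1 - Htail p r x) / (1 - (1 - y) * (1 - Htail p r x))
   - (1 - Htail p r (x - 1)) / (1 - (1 - y) * (1 - Htail p r (x - 1))) else 0)"

lemma GG_alt:
  assumes "0 < y" "y < 1"
  shows "GG y j = (1 - (1 - \<delta>) * (1 - y)) * (1 - Htail p r j) / ((1 - \<delta>) * (1 - (1 - y) * (1 - Htail p r j)))"
proof -
  have d: "\<delta> = cc / (u T + cc)" by (rule Htail_u)
  have pos: "u T > 0" "cc > 0" "u j \<ge> 0" using uT_pos cc_pos u_nonneg by auto
  show ?thesis unfolding Fu_u d GG_def using alg_GG[OF pos(2) pos(1) pos(3) assms] by simp
qed

lemma Gprob_psi: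
  assumes "0 < y" "y < 1"
  shows "Gprob p r T y x = (1 - (1 - \<delta>) * (1 - y)) / (1 - \<delta>) * psi y x"
proof -
  have key: "Gcdf p r T y j = (1 - (1 - \<delta>) * (1 - y)) / (1 - \<delta>) *
      ((1 - Htail p r j) / (1 - (1 - y) * (1 - Htail p r j)))" if "j \<le> T" for j
    using Gcdf_GG[OF that assms(1)] GG_alt[OF assms] by simp
  show ?thesis
  proof (cases "x = 0")
    case True then show ?thesis by (simp add: Gprob_def Gcdf_def psi_def)
  next
    case False
    show ?thesis
    proof (cases "x \<le> T")
      case True
      then show ?thesis using False key[of x] key[of "x - 1"]
        by (simp add: Gprob_def psi_def right_diff_distrib)
    next
      case F2: False
      then show ?thesis using False T1 by (simp add: Gprob_def psi_def Gcdf_def)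
    qed
  qed
qed

lemma Hyprob_Gprob:
  assumes "0 < y" "y < 1" "1 \<le> x" "x \<le> T"
  shows "Hyprob p r y x / (1 - Hytail p r y T) = Gprob p r T y x"
proof -
  have Hy: "Hytail p r y j = cc / (y * u j + cc)" for j
    unfolding Hytail_def u_def by (simp add: algebra_simps)
  have pos: "u T > 0" "cc > 0" using uT_pos cc_pos by auto
  have G: "GG y j = (1 - Hytail p r y j) / (1 - Hytail p r y T)" for j
    unfolding Hy GG_def using alg_Hy[OF pos(2) pos(1) u_nonneg[of j] assms(1)] by simp
  have "Hyprob p r y x = (1 - Hytail p r y x) - (1 - Hytail p r y (x - 1))"
    using assms by (simp add: Hyprob_def)
  then show ?thesis using assms Gcdf_GG[of x y] Gcdf_GG[of "x - 1" y] G
    by (simp add: Gprob_def diff_divide_distrib)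
qed

end

lemma beta_nn:
  "(\<integral>\<^sup>+y. ennreal (indicator {0<..<1} y * (y ^ K * (1 - y) ^ m)) \<partial>lborel)
     = ennreal (fact K * fact m / fact (K + m + 1))"
proof -
  have "((\<lambda>t. t powr (real (Suc K) - 1) * (1 - t) powr (real (Suc m) - 1)) has_integral Beta (real (Suc K)) (real (Suc m))) {0..1}"
    by (rule has_integral_Beta_real) auto
  then have I0: "((\<lambda>t::real. t powr (real (Suc K) - 1) * (1 - t) powr (real (Suc m) - 1)) has_integral Beta (real (Suc K)) (real (Suc m))) {0<..<1}"
    by (simp add: has_integral_Icc_iff_Ioo)
  have I: "((\<lambda>t::real. t ^ K * (1 - t) ^ m) has_integral Beta (real (Suc K)) (real (Suc m))) {0<..<1}"
    by (rule has_integral_spike_finite[OF finite.emptyI _ I0]) (auto simp: powr_realpow)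
  have B: "Beta (real (Suc K)) (real (Suc m)) = fact K * fact m / fact (K + m + 1)"
  proof -
    have "Gamma (real (Suc K)) = fact K" "Gamma (real (Suc m)) = fact m" "Gamma (real (Suc K) + real (Suc m)) = fact (K + m + 1)"
      using Gamma_fact[of K, where 'a=real] Gamma_fact[of m, where 'a=real] Gamma_fact[of "K + m + 1", where 'a=real]
      by (simp_all add: add_ac)
    then show ?thesis by (simp add: Beta_def)
  qed
  show ?thesis unfolding B[symmetric]
    by (rule nn_integral_has_integral_lebesgue[OF _ I]) auto
qed

lemma inv_binom:
  "ennreal (1 / real ((K + 1 + m) choose (K + 1))) =
   (\<integral>\<^sup>+y. ennreal (indicator {0<..<1} y * (real (K + 1) * (y ^ K * (1 - y) ^ m))) \<partial>lborel)"
proof -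
  have "(\<integral>\<^sup>+y. ennreal (indicator {0<..<1} y * (real (K + 1) * (y ^ K * (1 - y) ^ m))) \<partial>lborel)
      = (\<integral>\<^sup>+y. ennreal (real (K + 1)) * ennreal (indicator {0<..<1} y * (y ^ K * (1 - y) ^ m)) \<partial>lborel)"
    by (intro nn_integral_cong) (simp only: mult.left_commute[of "indicator _ _"] ennreal_mult'[OF of_nat_0_le_iff])
  also have "\<dots> = ennreal (real (K + 1)) * ennreal (fact K * fact m / fact (K + m + 1))"
    by (subst nn_integral_cmult) (auto simp: beta_nn)
  also have "\<dots> = ennreal (1 / real ((K + 1 + m) choose (K + 1)))"
  proof -
    have "real ((K + 1 + m) choose (K + 1)) = fact (K + 1 + m) / (fact (K + 1) * fact (K + 1 + m - (K + 1)))"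
      by (rule binomial_fact) simp
    then have "real ((K + 1 + m) choose (K + 1)) = fact (K + 1 + m) / (fact (K + 1) * fact m)"
      by simp
    then have "1 / real ((K + 1 + m) choose (K + 1)) = fact (K + 1) * fact m / fact (K + 1 + m)"
      by simp
    also have "\<dots> = real (K + 1) * (fact K * fact m / fact (K + m + 1))"
    proof -
      have "fact (K + 1) = real (K + 1) * (fact K :: real)" by (simp only: Suc_eq_plus1[symmetric] fact_Suc)
      moreover have "K + 1 + m = K + m + 1" by simp
      ultimately show ?thesis by (simp only: mult.assoc times_divide_eq_right)
    qed
    finally show ?thesis by (simp only: ennreal_mult'[OF of_nat_0_le_iff])
  qed
  finally show ?thesis ..
qed

lemma nn_count_prod:
  assumes "countable A" "countable B"
  shows "(\<integral>\<^sup>+x. f x \<partial>count_space (A \<times> B)) = (\<integral>\<^sup>+a. \<integral>\<^sup>+b. f (a, b) \<partial>count_space B \<partial>count_space A)"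
proof -
  interpret A: sigma_finite_measure "count_space A" by (rule sigma_finite_measure_count_space_countable[OF assms(1)])
  interpret B: sigma_finite_measure "count_space B" by (rule sigma_finite_measure_count_space_countable[OF assms(2)])
  have "(\<integral>\<^sup>+a. \<integral>\<^sup>+b. f (a, b) \<partial>count_space B \<partial>count_space A) = integral\<^sup>N (count_space A \<Otimes>\<^sub>M count_space B) f"
    by (rule B.nn_integral_fst) (simp add: pair_measure_countable[OF assms])
  then show ?thesis by (simp add: pair_measure_countable[OF assms])
qed

lemma geom_nn:
  fixes z :: real
  assumes "0 \<le> z" "z < 1"
  shows "(\<integral>\<^sup>+a. ennreal (z ^ a) \<partial>count_space UNIV) = ennreal (1 / (1 - z))"
  unfolding nn_integral_count_space_nat
  using assms by (intro suminf_ennreal_eq geometric_sums) auto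

definition "LKs n = {gs :: nat list. length gs = n \<and> (\<forall>g\<in>set gs. 0 < g)}"

lemma LKs_Suc: "bij_betw (\<lambda>(g, gs). g # gs) ({0<..} \<times> LKs n) (LKs (Suc n))"
  unfolding LKs_def
  by (rule bij_betwI') (auto simp: length_Suc_conv)

lemma QL_sum:
  assumes "\<And>g x. f g x \<ge> 0"
  shows "(\<integral>\<^sup>+gs. ennreal (QL f gs xs) \<partial>count_space (LKs (length xs)))
    = prod_list (map (\<lambda>x. \<integral>\<^sup>+g. ennreal (f g x) \<partial>count_space {0<..}) xs)"
proof (induction xs)
  case Nil
  have "LKs 0 = {[]}" by (auto simp: LKs_def)
  then show ?case by simp
next
  case (Cons x xs)
  have "(\<integral>\<^sup>+gs. ennreal (QL f gs (x # xs)) \<partial>count_space (LKs (length (x # xs))))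
     = (\<integral>\<^sup>+p. ennreal (QL f ((\<lambda>(g, gs). g # gs) p) (x # xs)) \<partial>count_space ({0<..} \<times> LKs (length xs)))"
    by (simp add: nn_integral_bij_count_space[OF LKs_Suc, where f="\<lambda>gs. ennreal (QL f gs (x # xs))", symmetric])
  also have "\<dots> = (\<integral>\<^sup>+g. \<integral>\<^sup>+gs. ennreal (f g x) * ennreal (QL f gs xs) \<partial>count_space (LKs (length xs)) \<partial>count_space {0<..})"
    by (subst nn_count_prod) (auto simp: ennreal_mult'[symmetric] assms)
  also have "\<dots> = (\<integral>\<^sup>+g. ennreal (f g x) * (\<integral>\<^sup>+gs. ennreal (QL f gs xs) \<partial>count_space (LKs (length xs))) \<partial>count_space {0<..})"
    by (subst nn_integral_cmult) auto
  also have "\<dots> = (\<integral>\<^sup>+g. ennreal (f g x) \<partial>count_space {0<..}) * (\<integral>\<^sup>+gs. ennreal (QL f gs xs) \<partial>count_space (LKs (length xs)))"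
    by (subst nn_integral_multc) auto
  finally show ?case using Cons.IH by simp
qed

lemma psi_series:
  fixes w F0 F1 :: real
  assumes "0 \<le> w" "w < 1" "0 \<le> F0" "F0 \<le> F1" "F1 \<le> 1"
  shows "(\<integral>\<^sup>+g. ennreal (w ^ (g - 1) * (F1 ^ g - F0 ^ g)) \<partial>count_space {0<..})
     = ennreal (F1 / (1 - w * F1) - F0 / (1 - w * F0))"
proof -
  have bij: "bij_betw Suc UNIV {0<..}"
    by (rule bij_betwI') (auto simp: gr0_conv_Suc)
  have s: "(\<lambda>g. F * (w * F) ^ g) sums (F * (1 / (1 - w * F)))" if "0 \<le> F" "F \<le> 1" for F :: real
  proof -
    have "w * F \<le> w" using assms that by (simp add: mult_left_le)
    then have "w * F < 1" using assms by linarith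
    moreover have "0 \<le> w * F" using assms that by simp
    ultimately have "(\<lambda>g. (w * F) ^ g) sums (1 / (1 - w * F))" by (intro geometric_sums) auto
    then show ?thesis by (rule sums_mult)
  qed
  have eq: "w ^ (Suc g - 1) * (F1 ^ Suc g - F0 ^ Suc g) = F1 * (w * F1) ^ g - F0 * (w * F0) ^ g" for g
    by (simp add: power_mult_distrib algebra_simps)
  have "(\<lambda>g. w ^ (Suc g - 1) * (F1 ^ Suc g - F0 ^ Suc g)) sums (F1 * (1 / (1 - w * F1)) - F0 * (1 / (1 - w * F0)))"
    unfolding eq using assms by (intro sums_diff s) auto
  moreover have "0 \<le> w ^ (Suc g - 1) * (F1 ^ Suc g - F0 ^ Suc g)" for g
  proof -
    have "F0 ^ Suc g \<le> F1 ^ Suc g" using assms by (intro power_mono) auto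
    then show ?thesis using assms by (intro mult_nonneg_nonneg) auto
  qed
  ultimately have "(\<Sum>g. ennreal (w ^ (Suc g - 1) * (F1 ^ Suc g - F0 ^ Suc g))) = ennreal (F1 / (1 - w * F1) - F0 / (1 - w * F0))"
    by (subst suminf_ennreal_eq) auto
  then show ?thesis
    by (simp add: nn_integral_bij_count_space[OF bij, symmetric] nn_integral_count_space_nat)
qed

lemma ksubsets_finite: "finite (ksubsets n k)"
  unfolding ksubsets_def by (rule finite_subset[of _ "Pow {..<n}"]) auto

lemma ksubsets_ne: "k \<le> n \<Longrightarrow> ksubsets n k \<noteq> {}"
proof -
  assume "k \<le> n"
  then have "{..<k} \<in> ksubsets n k" by (auto simp: ksubsets_def)
  then show ?thesis by auto
qed

lemma ksubsets_empty: "n < k \<Longrightarrow> ksubsets n k = {}"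
proof -
  assume "n < k"
  { fix S assume "S \<subseteq> {..<n}" "card S = k"
    then have "card S \<le> n" using card_mono[of "{..<n}" S] by simp
    then have False using \<open>n < k\<close> \<open>card S = k\<close> by simp }
  then show ?thesis unfolding ksubsets_def by auto
qed

lemma card_ksubsets: "card (ksubsets n k) = n choose k"
  unfolding ksubsets_def using n_subsets[of "{..<n}" k] by simp

lemma tip_in: "finite S \<Longrightarrow> i < card S \<Longrightarrow> tip S i \<in> S"
  unfolding tip_def by (metis length_sorted_list_of_set nth_mem set_sorted_list_of_set)

lemma sd_stake:
  assumes "S \<subseteq> {..<n}"
  shows "sampled_depths T \<omega> S = sampled_depths T (stake n \<omega> @- sconst 0) S"
proof -
  have fin: "finite S" using assms finite_subset by blast
  have "Hseq T \<omega> ` {tip S (i - 1) + 1 .. tip S i} = Hseq T (stake n \<omega> @- sconst 0) ` {tip S (i - 1) + 1 .. tip S i}"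
    if "i \<in> set [1..<card S]" for i
  proof (rule image_cong[OF refl])
    fix j assume j: "j \<in> {tip S (i - 1) + 1 .. tip S i}"
    have "tip S i < n" using tip_in[OF fin, of i] that assms by auto
    then have "j - 1 < n" "j \<noteq> 0" using j by auto
    then show "Hseq T \<omega> j = Hseq T (stake n \<omega> @- sconst 0) j"
      by (simp add: Hseq_def)
  qed
  then show ?thesis unfolding sampled_depths_def by (intro arg_cong[where f="(#) T"] map_cong) auto
qed

context cpp begin

definition "phi k d \<omega> = (if k \<le> NT T \<omega> then pmf (map_pmf (sampled_depths T \<omega>) (pmf_of_set (ksubsets (NT T \<omega>) k))) d else 0)"

definition "Gf k d n l = (if k \<le> n then pmf (map_pmf (sampled_depths T (l @- sconst 0)) (pmf_of_set (ksubsets n k))) d else 0)"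

lemma phi_Gf: "phi k d \<omega> = Gf k d (NT T \<omega>) (stake (NT T \<omega>) \<omega>)"
proof (cases "k \<le> NT T \<omega>")
  case True
  have "map_pmf (sampled_depths T \<omega>) (pmf_of_set (ksubsets (NT T \<omega>) k))
     = map_pmf (sampled_depths T (stake (NT T \<omega>) \<omega> @- sconst 0)) (pmf_of_set (ksubsets (NT T \<omega>) k))"
    using True ksubsets_ne ksubsets_finite
    by (intro map_pmf_cong refl sd_stake) (auto simp: ksubsets_def)
  then show ?thesis using True by (simp add: phi_def Gf_def)
qed (simp add: phi_def Gf_def)

lemma meas_phi: "phi k d \<in> borel_measurable M"
proof -
  have "(\<lambda>\<omega>. Gf k d (NT T \<omega>) (stake (NT T \<omega>) \<omega>)) \<in> borel_measurable M"
  proof (rule measurable_compose_countable'[where f="\<lambda>n \<omega>. Gf k d n (stake n \<omega>)" and g="NT T" and I=UNIV])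
    fix n show "(\<lambda>\<omega>. Gf k d n (stake n \<omega>)) \<in> borel_measurable M"
      by (rule measurable_compose[OF meas_stake]) simp
  qed auto
  then show ?thesis unfolding phi_Gf .
qed

lemma phi_nonneg: "phi k d \<omega> \<ge> 0"
  by (simp add: phi_def)

lemma phi_sum:
  assumes "Fin \<omega>"
  shows "ennreal (phi k d \<omega>) = (\<integral>\<^sup>+y. ennreal (1 / real (fst y choose k) * of_bool (NT T \<omega> = fst y \<and> sampled_depths T \<omega> (snd y) = d)) \<partial>count_space (Om k))"
proof -
  define N where "N = NT T \<omega>"
  define A where "A = ksubsets N k"
  have finA: "finite A" unfolding A_def by (rule ksubsets_finite)
  have "(\<integral>\<^sup>+y. ennreal (1 / real (fst y choose k) * of_bool (NT T \<omega> = fst y \<and> sampled_depths T \<omega> (snd y) = d)) \<partial>count_space (Om k))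
      = (\<Sum>y\<in>Pair N ` A. ennreal (1 / real (fst y choose k) * of_bool (NT T \<omega> = fst y \<and> sampled_depths T \<omega> (snd y) = d)))"
    by (rule nn_integral_count_space') (auto simp: finA N_def A_def Om_def ksubsets_finite)
  also have "\<dots> = (\<Sum>S\<in>A. ennreal (1 / real (N choose k) * of_bool (sampled_depths T \<omega> S = d)))"
    by (subst sum.reindex) (auto simp: inj_on_def N_def)
  also have "\<dots> = ennreal (\<Sum>S\<in>A. 1 / real (N choose k) * of_bool (sampled_depths T \<omega> S = d))"
    by (rule sum_ennreal) simp
  also have "(\<Sum>S\<in>A. 1 / real (N choose k) * of_bool (sampled_depths T \<omega> S = d)) = phi k d \<omega>"
  proof (cases "k \<le> N")
    case True
    have ne: "A \<noteq> {}" using ksubsets_ne[OF True] A_def by simp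
    have "phi k d \<omega> = card (A \<inter> sampled_depths T \<omega> -` {d}) / card A"
      using True ne finA by (simp add: phi_def pmf_map measure_pmf_of_set N_def[symmetric] A_def[symmetric])
    moreover have "card A = N choose k" by (simp add: A_def card_ksubsets)
    moreover have "A \<inter> sampled_depths T \<omega> -` {d} = A \<inter> {S. sampled_depths T \<omega> S = d}" by auto
    ultimately show ?thesis using finA by (simp add: sum_divide_distrib[symmetric])
  next
    case False
    then have "A = {}" using ksubsets_empty A_def by simp
    then show ?thesis using False by (simp add: phi_def N_def)
  qed
  finally show ?thesis ..
qed

lemma phi_Lam:
  assumes "Fin \<omega>" "1 \<le> k" "length xs = k - 1"
  shows "ennreal (phi k (T # xs) \<omega>) = (\<integral>\<^sup>+x. ennreal (1 / real (fst (Phi x) choose k)) *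
      of_bool (Eev T (fst x) (fst (snd x)) xs (snd (snd x)) \<omega>) \<partial>count_space (Lam (k - 1)))"
proof -
  have "ennreal (phi k (T # xs) \<omega>) = (\<integral>\<^sup>+x. ennreal (1 / real (fst (Phi x) choose k) *
      of_bool (NT T \<omega> = fst (Phi x) \<and> sampled_depths T \<omega> (snd (Phi x)) = T # xs)) \<partial>count_space (Lam (k - 1)))"
    unfolding phi_sum[OF assms(1)]
    by (rule nn_integral_bij_count_space[OF Phi_bij[OF assms(2)], symmetric])
  also have "\<dots> = (\<integral>\<^sup>+x. ennreal (1 / real (fst (Phi x) choose k)) *
      of_bool (Eev T (fst x) (fst (snd x)) xs (snd (snd x)) \<omega>) \<partial>count_space (Lam (k - 1)))"
  proof (intro nn_integral_cong)
    fix x :: "nat \<times> nat list \<times> nat" assume "x \<in> space (count_space (Lam (k - 1)))"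
    then have x: "x \<in> Lam (k - 1)" by simp
    obtain a gs b where xe: "x = (a, gs, b)" by (cases x) auto
    have "(NT T \<omega> = fst (Phi x) \<and> sampled_depths T \<omega> (snd (Phi x)) = T # xs) \<longleftrightarrow> Eev T a gs xs b \<omega>"
      using Ev_equiv[of a gs b "k - 1" xs \<omega>] x xe assms by simp
    then show "ennreal (1 / real (fst (Phi x) choose k) *
      of_bool (NT T \<omega> = fst (Phi x) \<and> sampled_depths T \<omega> (snd (Phi x)) = T # xs)) =
      ennreal (1 / real (fst (Phi x) choose k)) * of_bool (Eev T (fst x) (fst (snd x)) xs (snd (snd x)) \<omega>)"
      by (simp add: xe)
  qed
  finally show ?thesis .
qed

lemma phi_zero:
  assumes "\<not> (length d = k \<and> d ! 0 = T)" "1 \<le> k"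
  shows "phi k d \<omega> = 0"
proof (cases "k \<le> NT T \<omega>")
  case True
  define A where "A = ksubsets (NT T \<omega>) k"
  have ne: "A \<noteq> {}" "finite A" using ksubsets_ne[OF True] ksubsets_finite A_def by auto
  have "A \<inter> sampled_depths T \<omega> -` {d} = {}"
  proof (rule equals0I)
    fix S assume "S \<in> A \<inter> sampled_depths T \<omega> -` {d}"
    then have S: "S \<in> A" "sampled_depths T \<omega> S = d" by auto
    then have "card S = k" by (simp add: A_def ksubsets_def)
    then show False using S assms by (auto simp: sampled_depths_def)
  qed
  then show ?thesis using True ne by (simp add: phi_def pmf_map measure_pmf_of_set A_def[symmetric])
qed (simp add: phi_def)

lemma meas_Eev: "(\<lambda>\<omega>. of_bool (Eev T a gs xs b \<omega>) :: ennreal) \<in> borel_measurable M"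
proof -
  have 1: "Measurable.pred M (\<lambda>\<omega>. Rev T gs xs b (sdrop a \<omega>))"
    by (rule measurable_compose[OF measurable_sdrop meas_Rev])
  have 2: "Measurable.pred M (\<lambda>\<omega>. \<forall>v\<in>set (stake a \<omega>). v \<le> T)"
    by (rule meas_pred_stake)
  show ?thesis unfolding Eev_def by (rule meas_of_bool pred_intros_logic(3)[OF 2 1])+
qed

lemma P_Eev:
  assumes "length gs = length xs" "\<forall>g\<in>set gs. 0 < g"
  shows "(\<integral>\<^sup>+\<omega>. of_bool (Eev T a gs xs b \<omega>) \<partial>M) = ennreal ((1 - \<delta>) ^ a * (QL qr gs xs * ((1 - \<delta>) ^ b * \<delta>)))"
proof -
  have "(\<integral>\<^sup>+\<omega>. of_bool (Eev T a gs xs b \<omega>) \<partial>M)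
     = (\<integral>\<^sup>+\<omega>. of_bool (\<forall>v\<in>set (stake a \<omega>). v \<le> T) * of_bool (Rev T gs xs b (sdrop a \<omega>)) \<partial>M)"
    by (simp add: Eev_def of_bool_conj)
  also have "\<dots> = ennreal ((1 - \<delta>) ^ a) * ennreal (QL qr gs xs * ((1 - \<delta>) ^ b * \<delta>))"
    by (subst split_stake_sdrop) (auto intro!: meas_of_bool meas_Rev simp: nn_all_le P_Rev[OF assms])
  finally show ?thesis using delta_lt1 by (simp add: ennreal_mult'[symmetric])
qed

lemma Lam_countable: "countable (Lam K :: (nat \<times> nat list \<times> nat) set)" by (rule countableI_type)

lemma Num_1:
  assumes "1 \<le> k" "length xs = k - 1"
  shows "(\<integral>\<^sup>+\<omega>. ennreal (phi k (T # xs) \<omega>) \<partial>M) = (\<integral>\<^sup>+x. ennreal (1 / real (fst (Phi x) choose k)) *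
     ennreal ((1 - \<delta>) ^ fst x * (QL qr (fst (snd x)) xs * ((1 - \<delta>) ^ snd (snd x) * \<delta>))) \<partial>count_space (Lam (k - 1)))"
proof -
  have "(\<integral>\<^sup>+\<omega>. ennreal (phi k (T # xs) \<omega>) \<partial>M) = (\<integral>\<^sup>+\<omega>. (\<integral>\<^sup>+x. ennreal (1 / real (fst (Phi x) choose k)) *
      of_bool (Eev T (fst x) (fst (snd x)) xs (snd (snd x)) \<omega>) \<partial>count_space (Lam (k - 1))) \<partial>M)"
  proof (rule nn_integral_cong_AE)
    show "AE \<omega> in M. ennreal (phi k (T # xs) \<omega>) = (\<integral>\<^sup>+x. ennreal (1 / real (fst (Phi x) choose k)) *
      of_bool (Eev T (fst x) (fst (snd x)) xs (snd (snd x)) \<omega>) \<partial>count_space (Lam (k - 1)))"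
      using AE_Fin by eventually_elim (rule phi_Lam[OF _ assms])
  qed
  also have "\<dots> = (\<integral>\<^sup>+x. (\<integral>\<^sup>+\<omega>. ennreal (1 / real (fst (Phi x) choose k)) *
      of_bool (Eev T (fst x) (fst (snd x)) xs (snd (snd x)) \<omega>) \<partial>M) \<partial>count_space (Lam (k - 1)))"
    by (rule nn_integral_count_space_nn_integral[OF Lam_countable]) (auto intro!: borel_measurable_times_ennreal meas_Eev)
  also have "\<dots> = (\<integral>\<^sup>+x. ennreal (1 / real (fst (Phi x) choose k)) *
     ennreal ((1 - \<delta>) ^ fst x * (QL qr (fst (snd x)) xs * ((1 - \<delta>) ^ snd (snd x) * \<delta>))) \<partial>count_space (Lam (k - 1)))"
  proof (intro nn_integral_cong)
    fix x :: "nat \<times> nat list \<times> nat" assume "x \<in> space (count_space (Lam (k - 1)))"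
    then have x: "length (fst (snd x)) = length xs" "\<forall>g\<in>set (fst (snd x)). 0 < g"
      using assms by (auto simp: Lam_def)
    show "(\<integral>\<^sup>+\<omega>. ennreal (1 / real (fst (Phi x) choose k)) *
      of_bool (Eev T (fst x) (fst (snd x)) xs (snd (snd x)) \<omega>) \<partial>M) = ennreal (1 / real (fst (Phi x) choose k)) *
     ennreal ((1 - \<delta>) ^ fst x * (QL qr (fst (snd x)) xs * ((1 - \<delta>) ^ snd (snd x) * \<delta>)))"
      by (subst nn_integral_cmult) (auto intro!: meas_Eev simp: P_Eev[OF x])
  qed
  finally show ?thesis .
qed

lemma length_le_sum: "\<forall>g\<in>set gs. 0 < g \<Longrightarrow> length gs \<le> sum_list (gs :: nat list)"
  by (induction gs) auto

definition "mm K x = fst x + snd (snd x) + (sum_list (fst (snd x)) - K)"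

lemma Num_2:
  assumes "1 \<le> k" "length xs = k - 1"
  shows "(\<integral>\<^sup>+\<omega>. ennreal (phi k (T # xs) \<omega>) \<partial>M) = (\<integral>\<^sup>+y. (\<integral>\<^sup>+x.
     ennreal (indicator {0<..<1} y * (real k * (y ^ (k - 1) * (1 - y) ^ mm (k - 1) x))) *
     ennreal ((1 - \<delta>) ^ fst x * (QL qr (fst (snd x)) xs * ((1 - \<delta>) ^ snd (snd x) * \<delta>))) \<partial>count_space (Lam (k - 1))) \<partial>lborel)"
proof -
  have c: "ennreal (1 / real (fst (Phi x) choose k)) = (\<integral>\<^sup>+y. ennreal (indicator {0<..<1} y * (real k * (y ^ (k - 1) * (1 - y) ^ mm (k - 1) x))) \<partial>lborel)"
    if "x \<in> Lam (k - 1)" for x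
  proof -
    obtain a gs b where xe: "x = (a, gs, b)" by (cases x) auto
    have "length gs = k - 1" "\<forall>g\<in>set gs. 0 < g" using that xe by (auto simp: Lam_def)
    then have "k - 1 \<le> sum_list gs" using length_le_sum by metis
    then have "fst (Phi x) = (k - 1) + 1 + mm (k - 1) x" "k = (k - 1) + 1"
      using assms by (auto simp: xe Phi_def mm_def)
    then show ?thesis using inv_binom[of "k - 1" "mm (k - 1) x"] by metis
  qed
  have "(\<integral>\<^sup>+\<omega>. ennreal (phi k (T # xs) \<omega>) \<partial>M) = (\<integral>\<^sup>+x. (\<integral>\<^sup>+y.
     ennreal (indicator {0<..<1} y * (real k * (y ^ (k - 1) * (1 - y) ^ mm (k - 1) x))) *
     ennreal ((1 - \<delta>) ^ fst x * (QL qr (fst (snd x)) xs * ((1 - \<delta>) ^ snd (snd x) * \<delta>))) \<partial>lborel) \<partial>count_space (Lam (k - 1)))"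
    unfolding Num_1[OF assms]
    by (intro nn_integral_cong) (simp add: c nn_integral_multc)
  also have "\<dots> = (\<integral>\<^sup>+y. (\<integral>\<^sup>+x.
     ennreal (indicator {0<..<1} y * (real k * (y ^ (k - 1) * (1 - y) ^ mm (k - 1) x))) *
     ennreal ((1 - \<delta>) ^ fst x * (QL qr (fst (snd x)) xs * ((1 - \<delta>) ^ snd (snd x) * \<delta>))) \<partial>count_space (Lam (k - 1))) \<partial>lborel)"
    by (rule nn_integral_count_space_nn_integral[OF Lam_countable, symmetric]) measurable
  finally show ?thesis .
qed

lemma QL_nonneg: "(\<And>g x. f g x \<ge> 0) \<Longrightarrow> QL f gs xs \<ge> 0"
  by (induction f gs xs rule: QL.induct) auto

lemma QL_w:
  assumes "length gs = length xs" "\<forall>g\<in>set gs. 0 < g"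
  shows "QL (\<lambda>g x. w ^ (g - 1) * f g x) gs xs = w ^ (sum_list gs - length gs) * QL f gs xs"
  using assms
proof (induction gs xs rule: list_induct2)
  case Nil then show ?case by simp
next
  case (Cons g gs x xs)
  have g: "0 < g" and gs: "\<forall>g\<in>set gs. 0 < g" using Cons.prems by auto
  have le: "length gs \<le> sum_list gs" using length_le_sum[OF gs] .
  have "g + sum_list gs - Suc (length gs) = (g - 1) + (sum_list gs - length gs)" using g le by simp
  then show ?case using Cons.IH[OF gs] by (simp add: power_add)
qed

lemma psi_nonneg:
  assumes "0 < y" "y < 1"
  shows "psi y x \<ge> 0"
proof (cases "x \<le> T")
  case True
  define F0 where "F0 = 1 - Htail p r (x - 1)"
  define F1 where "F1 = 1 - Htail p r x"
  have F: "0 \<le> F0" "F0 \<le> F1" "F1 \<le> 1"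
    using Htail_le1[of "x - 1"] Fu_mono[of "x - 1" x] Htail_nonneg[of x] by (auto simp: F0_def F1_def)
  have w: "(1 - y) * F0 \<le> (1 - y) * F1" "(1 - y) * F1 < 1"
  proof -
    show "(1 - y) * F0 \<le> (1 - y) * F1" using F assms by (intro mult_left_mono) auto
    have "(1 - y) * F1 \<le> 1 - y" using F assms by (simp add: mult_left_le)
    then show "(1 - y) * F1 < 1" using assms by linarith
  qed
  have "F0 / (1 - (1 - y) * F0) \<le> F1 / (1 - (1 - y) * F1)"
    using F w by (intro frac_le) auto
  then show ?thesis using True by (simp add: psi_def F0_def F1_def)
qed (simp add: psi_def)

lemma qw_series:
  assumes "0 < y" "y < 1"
  shows "(\<integral>\<^sup>+g. ennreal ((1 - y) ^ (g - 1) * qr g x) \<partial>count_space {0<..}) = ennreal (psi y x)"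
proof (cases "x \<le> T")
  case True
  have F: "0 \<le> 1 - Htail p r (x - 1)" "1 - Htail p r (x - 1) \<le> 1 - Htail p r x" "1 - Htail p r x \<le> 1"
    using Htail_le1[of "x - 1"] Fu_mono[of "x - 1" x] Htail_nonneg[of x] by auto
  show ?thesis using True psi_series[OF _ _ F, of "1 - y"] assms by (simp add: qr_def psi_def)
qed (simp add: qr_def psi_def)

lemma ennreal_prod_list: "(\<And>x. x \<in> set xs \<Longrightarrow> f x \<ge> 0) \<Longrightarrow>
  prod_list (map (\<lambda>x. ennreal (f x)) xs) = ennreal (prod_list (map f xs))"
  by (induction xs) (auto simp: ennreal_mult' prod_list_nonneg)

lemma inner_sum:
  assumes y: "0 < y" "y < 1" and K: "length xs = K"
  shows "(\<integral>\<^sup>+x. ennreal (indicator {0<..<1} y * (real (Suc K) * (y ^ K * (1 - y) ^ mm K x))) *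
     ennreal ((1 - \<delta>) ^ fst x * (QL qr (fst (snd x)) xs * ((1 - \<delta>) ^ snd (snd x) * \<delta>))) \<partial>count_space (Lam K))
   = ennreal (real (Suc K) * \<delta> * y ^ K / (1 - (1 - \<delta>) * (1 - y)) ^ 2 * prod_list (map (psi y) xs))"
proof -
  define w where "w = 1 - y"
  define z where "z = (1 - \<delta>) * w"
  define C0 where "C0 = real (Suc K) * y ^ K * \<delta>"
  define qw where "qw = (\<lambda>g x. w ^ (g - 1) * qr g x)"
  have w: "0 \<le> w" "w < 1" using y by (auto simp: w_def)
  have z: "0 \<le> z" "z < 1"
  proof -
    show "0 \<le> z" using w delta_lt1 by (simp add: z_def)
    have "z \<le> w" using w delta_pos delta_lt1 by (simp add: z_def mult_left_le_one_le)
    then show "z < 1" using w by linarith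
  qed
  have C0: "C0 \<ge> 0" using y delta_pos by (simp add: C0_def)
  have qw0: "qw g x \<ge> 0" for g x using w qr_nonneg by (simp add: qw_def)
  have trm: "ennreal (indicator {0<..<1} y * (real (Suc K) * (y ^ K * (1 - y) ^ mm K x))) *
     ennreal ((1 - \<delta>) ^ fst x * (QL qr (fst (snd x)) xs * ((1 - \<delta>) ^ snd (snd x) * \<delta>)))
     = ((ennreal C0 * ennreal (z ^ fst x)) * ennreal (QL qw (fst (snd x)) xs)) * ennreal (z ^ snd (snd x))"
    if "x \<in> Lam K" for x
  proof -
    obtain a gs b where xe: "x = (a, gs, b)" by (cases x) auto
    have gs: "length gs = length xs" "\<forall>g\<in>set gs. 0 < g" using that xe K by (auto simp: Lam_def)
    have QLw: "QL qw gs xs = w ^ (sum_list gs - K) * QL qr gs xs"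
      unfolding qw_def using QL_w[OF gs, of w qr] gs K by simp
    have "indicator {0<..<1} y * (real (Suc K) * (y ^ K * (1 - y) ^ mm K x)) *
       ((1 - \<delta>) ^ a * (QL qr gs xs * ((1 - \<delta>) ^ b * \<delta>)))
       = C0 * z ^ a * QL qw gs xs * z ^ b"
      unfolding QLw using y by (simp add: xe mm_def C0_def z_def w_def power_add power_mult_distrib indicator_def)
    moreover have "0 \<le> indicator {0<..<1} y * (real (Suc K) * (y ^ K * (1 - y) ^ mm K x))" using y by simp
    moreover have "QL qw gs xs \<ge> 0" by (rule QL_nonneg[OF qw0])
    ultimately show ?thesis using C0 z by (simp add: xe ennreal_mult'[symmetric] mult.assoc)
  qed
  have eqLam: "Lam K = (UNIV :: nat set) \<times> (LKs K \<times> (UNIV :: nat set))"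
    by (auto simp: Lam_def LKs_def)
  have cL: "countable (LKs K)" by (rule countableI_type)
  have "(\<integral>\<^sup>+x. ennreal (indicator {0<..<1} y * (real (Suc K) * (y ^ K * (1 - y) ^ mm K x))) *
     ennreal ((1 - \<delta>) ^ fst x * (QL qr (fst (snd x)) xs * ((1 - \<delta>) ^ snd (snd x) * \<delta>))) \<partial>count_space (Lam K))
   = (\<integral>\<^sup>+x. ((ennreal C0 * ennreal (z ^ fst x)) * ennreal (QL qw (fst (snd x)) xs)) * ennreal (z ^ snd (snd x)) \<partial>count_space (Lam K))"
    by (intro nn_integral_cong trm) simp
  also have "\<dots> = (\<integral>\<^sup>+a. \<integral>\<^sup>+gs. \<integral>\<^sup>+b. ((ennreal C0 * ennreal (z ^ a)) * ennreal (QL qw gs xs)) * ennreal (z ^ b)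
      \<partial>count_space UNIV \<partial>count_space (LKs K) \<partial>count_space UNIV)"
    unfolding eqLam by (simp add: nn_count_prod cL)
  also have "\<dots> = (\<integral>\<^sup>+a. \<integral>\<^sup>+gs. ((ennreal C0 * ennreal (z ^ a)) * ennreal (QL qw gs xs)) * ennreal (1 / (1 - z))
      \<partial>count_space (LKs K) \<partial>count_space UNIV)"
    by (simp add: nn_integral_cmult geom_nn[OF z])
  also have "\<dots> = (\<integral>\<^sup>+a. (ennreal C0 * ennreal (z ^ a)) * prod_list (map (\<lambda>x. ennreal (psi y x)) xs) * ennreal (1 / (1 - z))
      \<partial>count_space UNIV)"
  proof -
    have "(\<integral>\<^sup>+gs. ennreal (QL qw gs xs) \<partial>count_space (LKs K)) = prod_list (map (\<lambda>x. ennreal (psi y x)) xs)"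
    proof -
      have qs: "(\<integral>\<^sup>+g. ennreal ((1 - y) ^ (g - Suc 0) * qr g x) \<partial>count_space {0<..}) = ennreal (psi y x)" for x
        using qw_series[OF y, of x] by simp
      show ?thesis using QL_sum[of qw xs, OF qw0] K by (simp add: qw_def w_def qs)
    qed
    then show ?thesis by (simp add: nn_integral_multc nn_integral_cmult)
  qed
  also have "\<dots> = ennreal C0 * ennreal (1 / (1 - z)) * prod_list (map (\<lambda>x. ennreal (psi y x)) xs) * ennreal (1 / (1 - z))"
    by (simp add: nn_integral_multc nn_integral_cmult geom_nn[OF z])
  also have "\<dots> = ennreal (real (Suc K) * \<delta> * y ^ K / (1 - (1 - \<delta>) * (1 - y)) ^ 2 * prod_list (map (psi y) xs))"
  proof -
    have pn: "prod_list (map (psi y) xs) \<ge> 0" using psi_nonneg[OF y] by (intro prod_list_nonneg) auto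
    have "C0 * (1 / (1 - z)) * prod_list (map (psi y) xs) * (1 / (1 - z)) =
      real (Suc K) * \<delta> * y ^ K / (1 - (1 - \<delta>) * (1 - y)) ^ 2 * prod_list (map (psi y) xs)"
      by (simp add: C0_def z_def w_def power2_eq_square)
    then show ?thesis using C0 z pn psi_nonneg[OF y]
      by (simp add: ennreal_prod_list ennreal_mult'[symmetric])
  qed
  finally show ?thesis .
qed

end

context cpp begin

lemma Num_final:
  assumes "1 \<le> k" "length xs = k - 1"
  shows "(\<integral>\<^sup>+\<omega>. ennreal (phi k (T # xs) \<omega>) \<partial>M) = (\<integral>\<^sup>+y. ennreal (indicator {0<..<1} y *
     (real k * \<delta> * y ^ (k - 1) / (1 - (1 - \<delta>) * (1 - y)) ^ 2 * prod_list (map (psi y) xs))) \<partial>lborel)"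
  unfolding Num_2[OF assms]
proof (intro nn_integral_cong)
  fix y :: real
  show "(\<integral>\<^sup>+x. ennreal (indicator {0<..<1} y * (real k * (y ^ (k - 1) * (1 - y) ^ mm (k - 1) x))) *
     ennreal ((1 - \<delta>) ^ fst x * (QL qr (fst (snd x)) xs * ((1 - \<delta>) ^ snd (snd x) * \<delta>))) \<partial>count_space (Lam (k - 1)))
    = ennreal (indicator {0<..<1} y *
     (real k * \<delta> * y ^ (k - 1) / (1 - (1 - \<delta>) * (1 - y)) ^ 2 * prod_list (map (psi y) xs)))"
  proof (cases "y \<in> {0<..<1}")
    case True
    then have y: "0 < y" "y < 1" by auto
    have k: "Suc (k - 1) = k" using assms by simp
    have "indicator {0<..<1} y = (1::real)" using True by simp
    then show ?thesis using inner_sum[OF y assms(2)] unfolding k by simp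
  next
    case False then show ?thesis by simp
  qed
qed

lemma meas_Gcdf: "(\<lambda>y. Gcdf p r T y j) \<in> borel_measurable borel"
proof -
  have "(\<lambda>y::real. ((r / p) ^ j - 1) / ((r / p) ^ T - 1) *
       ((r - p + y * (1 - p) * ((r / p) ^ T - 1)) / (r - p + y * (1 - p) * ((r / p) ^ j - 1)))) \<in> borel_measurable borel"
    by measurable
  then show ?thesis unfolding Gcdf_def by (cases "j = 0"; cases "T \<le> j") simp_all
qed

lemma meas_Gprob: "(\<lambda>y. Gprob p r T y j) \<in> borel_measurable borel"
  unfolding Gprob_def using meas_Gcdf by (cases "j = 0") (simp_all add: borel_measurable_diff)

lemma meas_mu: "(\<lambda>y. mu_dens k \<delta> y) \<in> borel_measurable borel"
  unfolding mu_dens_def by measurable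

lemma meas_mix: "(\<lambda>y. indicator {0<..<1} y * (mu_dens k \<delta> y * (\<Prod>i\<in>{1..<k}. Gprob p r T y (d ! i)))) \<in> borel_measurable lborel"
proof -
  have "(\<lambda>y. \<Prod>i\<in>{1..<k}. Gprob p r T y (d ! i)) \<in> borel_measurable borel"
    by (rule borel_measurable_prod) (rule meas_Gprob)
  then show ?thesis using meas_mu
    by (intro borel_measurable_times borel_measurable_indicator) (auto simp: measurable_lborel1)
qed

end

lemma prod_nth_list: "(\<Prod>i<length xs. f (xs ! i)) = prod_list (map f xs)"
  by (induction xs) (simp_all del: prod.lessThan_Suc add: prod.lessThan_Suc_shift)

lemma prod_shift: "length xs = K \<Longrightarrow> (\<Prod>i\<in>{1..<Suc K}. f ((T # xs) ! i)) = prod_list (map f xs)"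
proof -
  assume K: "length xs = K"
  have e: "{1..<Suc K} = Suc ` {..<K}" by (auto simp: image_iff) (metis Suc_le_D lessThan_iff less_Suc_eq_le Suc_less_eq)
  have "(\<Prod>i\<in>Suc ` {..<K}. f ((T # xs) ! i)) = (\<Prod>i<K. f ((T # xs) ! Suc i))"
    by (subst prod.reindex) auto
  also have "\<dots> = (\<Prod>i<K. f (xs ! i))" by simp
  also have "\<dots> = prod_list (map f xs)" using K prod_nth_list[of f xs] by simp
  finally show ?thesis unfolding e .
qed

lemma prod_list_cmult: "prod_list (map (\<lambda>x. c * f x) xs) = c ^ length xs * prod_list (map f xs :: real list)"
  by (induction xs) (simp_all add: algebra_simps)

lemma alg_final:
  fixes A B kk P :: real
  assumes "A \<noteq> 0" "B \<noteq> 0"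
  shows "kk / A ^ (K + 2) * ((A / B) ^ K * P) = kk / A ^ 2 * P * (1 / B ^ K)"
  using assms by (simp add: power_add power_divide field_simps power2_eq_square)

context cpp begin

lemma meas_psi: "(\<lambda>y. psi y x) \<in> borel_measurable borel"
  unfolding psi_def by (cases "x \<le> T") simp_all

lemma meas_prodlist: "(\<And>x. (\<lambda>y. f y x) \<in> borel_measurable N) \<Longrightarrow> (\<lambda>y. prod_list (map (f y) xs) :: real) \<in> borel_measurable N"
  by (induction xs) (auto intro!: borel_measurable_times)

lemma tree_phi:
  assumes "1 \<le> k"
  shows "tree_cond_prob p r T k d = enn2real (\<integral>\<^sup>+\<omega>. ennreal (phi k d \<omega>) \<partial>M) / (1 - \<delta>) ^ (k - 1)"
proof -
  have f: "(\<lambda>\<omega>. if k \<le> NT T \<omega> then pmf (map_pmf (sampled_depths T \<omega>) (pmf_of_set (ksubsets (NT T \<omega>) k))) d else 0) = phi k d"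
    by (simp add: phi_def fun_eq_iff)
  have "(\<integral>\<omega>. phi k d \<omega> \<partial>M) = enn2real (\<integral>\<^sup>+\<omega>. ennreal (phi k d \<omega>) \<partial>M)"
    by (rule enn2real_nn_integral_eq_integral[symmetric]) (auto simp: phi_nonneg meas_phi)
  then show ?thesis unfolding tree_cond_prob_def Let_def f denom[OF assms] by simp
qed

lemma mix_phi:
  assumes "1 \<le> k" "length xs = k - 1"
  shows "mixture_prob p r T k (T # xs) = enn2real (\<integral>\<^sup>+\<omega>. ennreal (phi k (T # xs) \<omega>) \<partial>M) / (1 - \<delta>) ^ (k - 1)"
proof -
  define K where "K = k - 1"
  have kK: "k = Suc K" using assms K_def by simp
  have xsK: "length xs = K" using assms K_def by simp
  define g where "g y = indicator {0<..<1} y *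
     (real k * \<delta> * y ^ (k - 1) / (1 - (1 - \<delta>) * (1 - y)) ^ 2 * prod_list (map (psi y) xs))" for y
  have g0: "g y \<ge> 0" for y
  proof (cases "y \<in> {0<..<1}")
    case True
    then have y: "0 < y" "y < 1" by auto
    have "prod_list (map (psi y) xs) \<ge> 0" using psi_nonneg[OF y] by (intro prod_list_nonneg) auto
    then show ?thesis using True delta_pos by (simp add: g_def)
  qed (simp add: g_def)
  have pt: "indicator {0<..<1} y * (mu_dens k \<delta> y * (\<Prod>i\<in>{1..<k}. Gprob p r T y ((T # xs) ! i)))
     = g y * (1 / (1 - \<delta>) ^ K)" for y
  proof (cases "y \<in> {0<..<1}")
    case True
    then have y: "0 < y" "y < 1" by auto
    define A where "A = 1 - (1 - \<delta>) * (1 - y)"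
    have A: "A \<noteq> 0"
    proof -
      have "(1 - \<delta>) * (1 - y) \<le> 1 - \<delta>" using y delta_lt1 by (intro mult_left_le) auto
      then have "(1 - \<delta>) * (1 - y) < 1" using delta_pos by linarith
      then show ?thesis by (simp add: A_def)
    qed
    have B: "1 - \<delta> \<noteq> 0" using delta_lt1 by simp
    have "(\<Prod>i\<in>{1..<k}. Gprob p r T y ((T # xs) ! i)) = prod_list (map (Gprob p r T y) xs)"
      unfolding kK by (rule prod_shift[OF xsK])
    also have "\<dots> = (A / (1 - \<delta>)) ^ K * prod_list (map (psi y) xs)"
    proof -
      have "Gprob p r T y = (\<lambda>x. A / (1 - \<delta>) * psi y x)" by (rule ext) (simp add: Gprob_psi[OF y] A_def)
      then show ?thesis using prod_list_cmult[of "A / (1 - \<delta>)" "psi y" xs] xsK by (simp only:)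
    qed
    finally have P: "(\<Prod>i\<in>{1..<k}. Gprob p r T y ((T # xs) ! i)) = (A / (1 - \<delta>)) ^ K * prod_list (map (psi y) xs)" .
    have mu: "mu_dens k \<delta> y = (real k * \<delta> * y ^ (k - 1)) / A ^ (K + 2)"
      by (simp add: mu_dens_def A_def kK)
    show ?thesis unfolding P mu using True alg_final[OF A B, of "real k * \<delta> * y ^ (k - 1)" K "prod_list (map (psi y) xs)"]
      by (simp add: g_def A_def)
  qed (simp add: g_def)
  have "mixture_prob p r T k (T # xs) = (LINT y:{0<..<1}|lborel. mu_dens k \<delta> y * (\<Prod>i\<in>{1..<k}. Gprob p r T y ((T # xs) ! i)))"
    using assms by (simp add: mixture_prob_def)
  also have "\<dots> = (\<integral>y. indicator {0<..<1} y * (mu_dens k \<delta> y * (\<Prod>i\<in>{1..<k}. Gprob p r T y ((T # xs) ! i))) \<partial>lborel)"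
    by (simp add: set_lebesgue_integral_def)
  also have "\<dots> = enn2real (\<integral>\<^sup>+y. ennreal (indicator {0<..<1} y * (mu_dens k \<delta> y * (\<Prod>i\<in>{1..<k}. Gprob p r T y ((T # xs) ! i)))) \<partial>lborel)"
  proof (rule enn2real_nn_integral_eq_integral[symmetric])
    have "0 \<le> g y * (1 / (1 - \<delta>) ^ K)" for y using g0[of y] delta_lt1 by simp
    then show "AE y in lborel. 0 \<le> indicator {0<..<1} y * (mu_dens k \<delta> y * (\<Prod>i\<in>{1..<k}. Gprob p r T y ((T # xs) ! i)))"
      by (simp only: pt AE_I2)
    show "(\<lambda>y. indicator {0<..<1} y * (mu_dens k \<delta> y * (\<Prod>i\<in>{1..<k}. Gprob p r T y ((T # xs) ! i)))) \<in> borel_measurable lborel"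
      by (rule meas_mix)
  qed simp
  also have "(\<integral>\<^sup>+y. ennreal (indicator {0<..<1} y * (mu_dens k \<delta> y * (\<Prod>i\<in>{1..<k}. Gprob p r T y ((T # xs) ! i)))) \<partial>lborel)
     = (\<integral>\<^sup>+y. ennreal (g y) \<partial>lborel) * ennreal (1 / (1 - \<delta>) ^ K)"
  proof -
    have "(\<integral>\<^sup>+y. ennreal (indicator {0<..<1} y * (mu_dens k \<delta> y * (\<Prod>i\<in>{1..<k}. Gprob p r T y ((T # xs) ! i)))) \<partial>lborel)
       = (\<integral>\<^sup>+y. ennreal (g y) * ennreal (1 / (1 - \<delta>) ^ K) \<partial>lborel)"
    proof (intro nn_integral_cong)
      fix y :: real
      show "ennreal (indicator {0<..<1} y * (mu_dens k \<delta> y * (\<Prod>i\<in>{1..<k}. Gprob p r T y ((T # xs) ! i))))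
        = ennreal (g y) * ennreal (1 / (1 - \<delta>) ^ K)"
        unfolding pt using g0[of y] by (rule ennreal_mult')
    qed
    also have "\<dots> = (\<integral>\<^sup>+y. ennreal (g y) \<partial>lborel) * ennreal (1 / (1 - \<delta>) ^ K)"
    proof (rule nn_integral_multc)
      have "(\<lambda>y. prod_list (map (psi y) xs)) \<in> borel_measurable lborel"
        by (rule meas_prodlist) (simp add: meas_psi measurable_lborel1)
      then show "(\<lambda>y. ennreal (g y)) \<in> borel_measurable lborel"
        unfolding g_def by measurable
    qed
    finally show ?thesis .
  qed
  also have "(\<integral>\<^sup>+y. ennreal (g y) \<partial>lborel) = (\<integral>\<^sup>+\<omega>. ennreal (phi k (T # xs) \<omega>) \<partial>M)"
    unfolding g_def by (rule Num_final[OF assms, symmetric])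
  finally show ?thesis using delta_lt1 by (simp add: enn2real_mult K_def)
qed

end

theorem corollary2p9:
  fixes p r :: real and T k :: nat
  assumes "0 < p" and "p < 1" and "0 \<le> r" and "r \<le> 1" and "p \<noteq> r" and "r / p > 1"
    and "1 \<le> T" and "1 \<le> k"
  shows "(\<forall>d :: nat list. tree_cond_prob p r T k d = mixture_prob p r T k d)
    \<and> (\<forall>xs :: nat list. length xs = k - 1 \<longrightarrow> set xs \<subseteq> {1..T} \<longrightarrow>
         tree_cond_prob p r T k (T # xs) =
           (LINT y:{0<..<1}|lborel. mu_dens k (Htail p r T) y *
              (\<Prod>i<k - 1. Hyprob p r y (xs ! i) / (1 - Hytail p r y T))))"
proof -
  interpret cpp p r T using assms by unfold_locales auto
  have k: "1 \<le> k" by fact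
  have P1: "tree_cond_prob p r T k d = mixture_prob p r T k d" for d
  proof (cases "length d = k \<and> d ! 0 = T")
    case True
    then obtain xs where d: "d = T # xs" using k by (cases d) auto
    have xs: "length xs = k - 1" using True d by simp
    show ?thesis unfolding d tree_phi[OF k] mix_phi[OF k xs] ..
  next
    case False
    then have "phi k d \<omega> = 0" for \<omega> using phi_zero[OF False k] by simp
    then have "tree_cond_prob p r T k d = 0" by (simp add: tree_phi[OF k])
    moreover have "mixture_prob p r T k d = 0" using False unfolding mixture_prob_def by (simp only: if_False)
    ultimately show ?thesis by simp
  qed
  have P2: "tree_cond_prob p r T k (T # xs) =
           (LINT y:{0<..<1}|lborel. mu_dens k (Htail p r T) y *
              (\<Prod>i<k - 1. Hyprob p r y (xs ! i) / (1 - Hytail p r y T)))"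
    if xs: "length xs = k - 1" "set xs \<subseteq> {1..T}" for xs
  proof -
    have "tree_cond_prob p r T k (T # xs) = (LINT y:{0<..<1}|lborel. mu_dens k (Htail p r T) y *
        (\<Prod>i\<in>{1..<k}. Gprob p r T y ((T # xs) ! i)))"
    proof -
      have "length (T # xs) = k \<and> (T # xs) ! 0 = T" using xs k by simp
      then show ?thesis unfolding P1 mixture_prob_def by (simp only: simp_thms if_True)
    qed
    also have "\<dots> = (LINT y:{0<..<1}|lborel. mu_dens k (Htail p r T) y *
              (\<Prod>i<k - 1. Hyprob p r y (xs ! i) / (1 - Hytail p r y T)))"
    proof (rule set_lebesgue_integral_cong)
      show "{0<..<1::real} \<in> sets lborel" by simp
      show "\<forall>y. y \<in> {0<..<1} \<longrightarrow> mu_dens k (Htail p r T) y * (\<Prod>i\<in>{1..<k}. Gprob p r T y ((T # xs) ! i)) =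
          mu_dens k (Htail p r T) y * (\<Prod>i<k - 1. Hyprob p r y (xs ! i) / (1 - Hytail p r y T))"
      proof (intro allI impI)
        fix y :: real assume "y \<in> {0<..<1}"
        then have y: "0 < y" "y < 1" by auto
        have kk: "k = Suc (k - 1)" using k by simp
        have "(\<Prod>i\<in>{1..<k}. Gprob p r T y ((T # xs) ! i)) = prod_list (map (Gprob p r T y) xs)"
          by (subst kk) (rule prod_shift[OF xs(1)])
        also have "\<dots> = (\<Prod>i<k - 1. Gprob p r T y (xs ! i))"
          using prod_nth_list[of "Gprob p r T y" xs] xs(1) by simp
        also have "\<dots> = (\<Prod>i<k - 1. Hyprob p r y (xs ! i) / (1 - Hytail p r y T))"
        proof (rule prod.cong[OF refl])
          fix i assume "i \<in> {..<k - 1}"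
          then have "xs ! i \<in> set xs" using xs(1) by (intro nth_mem) simp
          then have "xs ! i \<in> {1..T}" using xs(2) by blast
          then show "Gprob p r T y (xs ! i) = Hyprob p r y (xs ! i) / (1 - Hytail p r y T)"
            using Hyprob_Gprob[OF y] by simp
        qed
        finally show "mu_dens k (Htail p r T) y * (\<Prod>i\<in>{1..<k}. Gprob p r T y ((T # xs) ! i)) =
          mu_dens k (Htail p r T) y * (\<Prod>i<k - 1. Hyprob p r y (xs ! i) / (1 - Hytail p r y T))" by simp
      qed
    qed
    finally show ?thesis .
  qed
  show ?thesis using P1 P2 by blast
qed

end
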